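(* Let $c>0$, $\rho>0$ with $\rho\ne1$, and let $M\ge m\ge0$ with $M>0$. Then $\mathcal{V}_{m,M}\subsetneq\mathcal{V}_{\mathcal{A}}$.
   Context: System: $\dot u=u(1-u-v)-a(t)cu$, $\dot v=\rho v(1-u-v)-a(t)u$, initial data in $[0,1]^2$. $\mathcal{A}$ is the set of functions $a:[0,+\infty)\to[0,+\infty)$ continuous except at most at finitely many points; a solution for $a$ is continuous, $C^1$ off the discontinuities of $a$, solves the system there and is continuous at $t=0$. Stopping time $T_s$: $+\infty$ if the solution stays in $[0,1]\times(0,1]$ for all $t\ge0$, else the first $T$ with $v(T)=0$, $u(T)>0$. $\mathcal{E}(a(\cdot))$ = set of initial data in $[0,1]^2\setminus\{(0,0)\}$ with $T_s<\infty$; for $\mathcal{T}\subseteq\mathcal{A}$, $\mathcal{V}_{\mathcal{T}}=\bigcup_{a\in\mathcal{T}}\mathcal{E}(a(\cdot))$. $\mathcal{A}_{m,M}=\{a\in\mathcal{A}: m\le a(t)\le M\ \forall t>0\}$ and $\mathcal{V}_{m,M}=\mathcal{V}_{\mathcal{A}_{m,M}}$. *)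

theory Defs
  imports Complex_Main
begin

definition disc :: "(real \<Rightarrow> real) \<Rightarrow> real set" where
  "disc a = {t. t \<ge> 0 \<and> \<not> continuous (at t within {0..}) a}"

definition admissible :: "(real \<Rightarrow> real) set" where
  "admissible = {a. (\<forall>t\<ge>0. a t \<ge> 0) \<and> finite (disc a)}"

definition admissible_mM :: "real \<Rightarrow> real \<Rightarrow> (real \<Rightarrow> real) set" where
  "admissible_mM m M = {a \<in> admissible. \<forall>t>0. m \<le> a t \<and> a t \<le> M}"

definition solves_on :: "real \<Rightarrow> real \<Rightarrow> (real \<Rightarrow> real) \<Rightarrow> real
    \<Rightarrow> (real \<Rightarrow> real) \<Rightarrow> (real \<Rightarrow> real) \<Rightarrow> bool" where
  "solves_on c \<rho> a T u v \<longleftrightarrow>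
     continuous_on {0..T} u \<and> continuous_on {0..T} v \<and>
     (\<forall>t. 0 < t \<and> t < T \<and> t \<notin> disc a \<longrightarrow>
        (u has_real_derivative (u t * (1 - u t - v t) - a t * c * u t)) (at t) \<and>
        (v has_real_derivative (\<rho> * v t * (1 - u t - v t) - a t * u t)) (at t))"

text \<open>E(a): initial data in [0,1]^2 minus the origin with finite stopping time,
  i.e. the (unique) solution reaches a point with v = 0 and u > 0.\<close>
definition E_set :: "real \<Rightarrow> real \<Rightarrow> (real \<Rightarrow> real) \<Rightarrow> (real \<times> real) set" where
  "E_set c \<rho> a = {(u0, v0). 0 \<le> u0 \<and> u0 \<le> 1 \<and> 0 \<le> v0 \<and> v0 \<le> 1 \<and> (u0, v0) \<noteq> (0, 0) \<and>
      (\<exists>T\<ge>0. \<exists>u v. solves_on c \<rho> a T u v \<and> u 0 = u0 \<and> v 0 = v0 \<and> v T = 0 \<and> u T > 0)}"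

definition V_set :: "real \<Rightarrow> real \<Rightarrow> (real \<Rightarrow> real) set \<Rightarrow> (real \<times> real) set" where
  "V_set c \<rho> \<T> = (\<Union>a\<in>\<T>. E_set c \<rho> a)"

end

theory Submission
  imports Defs "HOL-Analysis.Analysis"
begin

lemma mono_fin:
  fixes z z' :: "real \<Rightarrow> real"
  assumes "r \<le> s" "finite S" "continuous_on {r..s} z"
    "\<And>t. t \<in> {r<..<s} - S \<Longrightarrow> (z has_real_derivative z' t) (at t) \<and> z' t \<ge> 0"
  shows "z r \<le> z s"
proof -
  have "(z' has_integral (z s - z r)) {r..s}"
    apply (rule fundamental_theorem_of_calculus_interior_strong[OF assms(2,1) _ assms(3)])
    using assms(4) by (simp add: has_real_derivative_iff_has_vector_derivative)
  moreover have "\<And>t. t \<in> {r..s} \<Longrightarrow> 0 \<le> (if t \<in> {r<..<s} - S then z' t else 0)" using assms(4) by auto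
  ultimately show ?thesis
  proof -
    have "((\<lambda>t. if t \<in> {r<..<s} - S then z' t else 0) has_integral (z s - z r)) {r..s}"
    proof (rule has_integral_spike[OF _ _ \<open>(z' has_integral (z s - z r)) {r..s}\<close>])
      show "negligible ({r,s} \<union> S)" using assms(2) by (simp add: negligible_finite)
      show "\<And>x. x \<in> {r..s} - ({r, s} \<union> S) \<Longrightarrow> (if x \<in> {r<..<s} - S then z' x else 0) = z' x" by auto
    qed
    then show ?thesis using has_integral_nonneg assms(4) by (smt (verit) DiffI greaterThanLessThan_iff)
  qed
qed


lemma barrier:
  fixes y y' :: "real \<Rightarrow> real"
  assumes "a \<le> b" "finite S" "continuous_on {a..b} y" "y a \<ge> 0"
    "\<And>t. t \<in> {a<..<b} - S \<Longrightarrow> y t < 0 \<Longrightarrow> (y has_real_derivative y' t) (at t) \<and> y' t \<ge> K * y t"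
  shows "\<forall>t\<in>{a..b}. y t \<ge> 0"
proof (rule ccontr)
  assume "\<not> ?thesis"
  then obtain s where s: "s \<in> {a..b}" "y s < 0" by force
  define A where "A = {t\<in>{a..s}. y t \<ge> 0}"
  have Ane: "a \<in> A" using s assms(4) by (auto simp: A_def)
  have cs: "continuous_on {a..s} y" using assms(3) s by (auto intro: continuous_on_subset)
  have Acl: "closed A"
  proof -
    have "A = {a..s} \<inter> y -` {0..}" by (auto simp: A_def)
    then show ?thesis using continuous_closed_preimage[OF cs closed_atLeastAtMost closed_atLeast] by simp
  qed
  define r where "r = Sup A"
  have bdd: "bdd_above A" by (auto simp: A_def bdd_above_def)
  have rA: "r \<in> A" unfolding r_def using closed_contains_Sup[OF _ bdd Acl] Ane by auto
  then have r: "a \<le> r" "r \<le> s" "y r \<ge> 0" by (auto simp: A_def)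
  have rs: "r < s" using r s by (cases "r = s") auto
  have neg: "y t < 0" if "t \<in> {r<..s}" for t
  proof (rule ccontr)
    assume "\<not> y t < 0"
    then have "t \<in> A" using that r by (auto simp: A_def)
    then have "t \<le> r" unfolding r_def using bdd by (rule cSup_upper)
    then show False using that by auto
  qed
  define z where "z t = y t * exp (- K * t)" for t
  have "z r \<le> z s"
  proof (rule mono_fin[OF less_imp_le[OF rs] assms(2)])
    show "continuous_on {r..s} z" unfolding z_def
      by (intro continuous_intros continuous_on_subset[OF assms(3)]) (use r s in auto)
    fix t assume t: "t \<in> {r<..<s} - S"
    then have t2: "t \<in> {a<..<b} - S" using r s by auto
    have yt: "y t < 0" using neg t by auto
    have d: "(y has_real_derivative y' t) (at t)" "y' t \<ge> K * y t" using assms(5)[OF t2 yt] by auto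
    have "(z has_real_derivative (y' t * exp (- K * t) + y t * (exp (- K * t) * (- K)))) (at t)"
      unfolding z_def by (intro derivative_eq_intros d(1)) (auto simp: d(1))
    moreover have "y' t * exp (- K * t) + y t * (exp (- K * t) * (- K)) = (y' t - K * y t) * exp (- K * t)"
      by (simp add: algebra_simps)
    moreover have "(y' t - K * y t) * exp (- K * t) \<ge> 0" using d(2) by simp
    ultimately show "(z has_real_derivative (y' t - K * y t) * exp (- K * t)) (at t) \<and> (y' t - K * y t) * exp (- K * t) \<ge> 0"
      by auto
  qed
  moreover have "z r \<ge> 0" using r by (simp add: z_def)
  moreover have "z s < 0" using s by (simp add: z_def mult_neg_pos)
  ultimately show False by linarith
qed

lemma first_zero:
  fixes v :: "real \<Rightarrow> real"
  assumes "continuous_on {0..T} v" "v 0 > 0" "v T \<le> 0" "T \<ge> 0"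
  shows "\<exists>T'. 0 < T' \<and> T' \<le> T \<and> v T' \<le> 0 \<and> (\<forall>t\<in>{0..<T'}. v t > 0)"
proof -
  define A where "A = {t\<in>{0..T}. v t \<le> 0}"
  have "A = {0..T} \<inter> v -` {..0}" by (auto simp: A_def)
  then have Acl: "closed A" using continuous_closed_preimage[OF assms(1) closed_atLeastAtMost closed_atMost] by simp
  have Ane: "T \<in> A" using assms by (auto simp: A_def)
  have bdd: "bdd_below A" by (auto simp: A_def bdd_below_def)
  define T' where "T' = Inf A"
  have TA: "T' \<in> A" unfolding T'_def using closed_contains_Inf[OF _ bdd Acl] Ane by auto
  have "\<forall>t\<in>{0..<T'}. v t > 0"
  proof
    fix t assume t: "t \<in> {0..<T'}"
    show "v t > 0"
    proof (rule ccontr)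
      assume "\<not> v t > 0"
      then have "t \<in> A" using t TA by (auto simp: A_def)
      then have "T' \<le> t" unfolding T'_def using bdd by (rule cInf_lower)
      then show False using t by auto
    qed
  qed
  moreover have "T' \<noteq> 0" using TA assms(2) by (auto simp: A_def)
  ultimately show ?thesis using TA by (auto simp: A_def intro!: exI[of _ T'])
qed

lemma bound_cont:
  fixes f :: "real \<Rightarrow> real"
  assumes "continuous_on {a..b} f"
  shows "\<exists>B. \<forall>t\<in>{a..b}. \<bar>f t\<bar> \<le> B"
proof -
  have "bounded (f ` {a..b})" by (rule compact_imp_bounded[OF compact_continuous_image[OF assms compact_Icc]])
  then show ?thesis by (auto simp: bounded_real)
qed

lemma sol_deriv:
  assumes "solves_on c \<rho> a T u v" "0 < t" "t < T" "t \<notin> disc a"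
  shows "(u has_real_derivative (u t * (1 - u t - v t) - a t * c * u t)) (at t)"
        "(v has_real_derivative (\<rho> * v t * (1 - u t - v t) - a t * u t)) (at t)"
  using assms unfolding solves_on_def by auto

lemma W_ident:
  fixes c \<rho> u v a :: real
  assumes "c > 0" "\<rho> > 0"
  shows "(\<rho> * v * (1 - u - v) - a * u) - (u * (1 - u - v) - a * c * u) / c
     = ((\<rho>*c+1)/(c+1)) * (1 - u - v) * ((v - u/c) - (1-\<rho>)/(1+\<rho>*c))
       + ((\<rho>*c+1)/(c+1)) * ((1-\<rho>)/(1+\<rho>*c)) * (1 - u - v)^2"
proof -
  have h: "1 + \<rho>*c \<noteq> 0" "c + 1 \<noteq> 0" "c \<noteq> 0" "\<rho>*c+1 \<noteq> 0" using assms by (auto simp: add_pos_pos) (smt (verit) mult_pos_pos)+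
  show ?thesis using h by (simp add: divide_simps power2_eq_square) algebra
qed

lemma nonreach_lt1:
  fixes c \<rho> m M T u0 v0 \<delta> \<epsilon> :: real
  defines "\<gamma> \<equiv> (\<rho>*c+1)/(c+1)" and "WQ \<equiv> (1-\<rho>)/(1+\<rho>*c)"
  defines "C \<equiv> (1+\<rho>) + M*(c+1)"
  defines "\<tau> \<equiv> \<delta>/(2*C)" and "\<kappa> \<equiv> \<gamma>*WQ*\<delta>^2/4"
  assumes c: "c > 0" and r: "\<rho> > 0" "\<rho> < 1" and M: "M > 0" and m: "0 \<le> m"
  assumes adm: "a \<in> admissible_mM m M" and sol: "solves_on c \<rho> a T u v" and T: "T \<ge> 0"
  assumes init: "u 0 = u0" "v 0 = v0" and vT: "v T = 0"
  assumes p: "0 \<le> u0" "u0 \<le> 1" "0 < v0" "v0 \<le> 1" "\<delta> > 0" "1 - u0 - v0 \<le> -\<delta>"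
     "v0 - u0/c \<ge> WQ - \<epsilon>" "\<epsilon> \<le> \<kappa>*\<tau>" "\<kappa>*\<tau> < WQ"
  shows False
proof -
  have afin: "finite (disc a)" and apos: "\<And>t. t \<ge> 0 \<Longrightarrow> a t \<ge> 0"
    and abd: "\<And>t. t > 0 \<Longrightarrow> m \<le> a t \<and> a t \<le> M"
    using adm by (auto simp: admissible_mM_def admissible_def)
  have cu: "continuous_on {0..T} u" and cv: "continuous_on {0..T} v" using sol by (auto simp: solves_on_def)
  define D where "D t = 1 - u t - v t" for t
  define W where "W t = v t - u t / c" for t
  define ud where "ud t = u t * (1 - u t - v t) - a t * c * u t" for t
  define vd where "vd t = \<rho> * v t * (1 - u t - v t) - a t * u t" for t
  have der: "(u has_real_derivative ud t) (at t)" "(v has_real_derivative vd t) (at t)"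
    if "0 < t" "t < T" "t \<notin> disc a" for t
    using sol_deriv[OF sol that] by (auto simp: ud_def vd_def)
  have gpos: "\<gamma> > 0" unfolding \<gamma>_def using c r by (auto intro!: divide_pos_pos add_pos_pos)
  have WQpos: "WQ > 0" unfolding WQ_def using c r by (auto intro!: divide_pos_pos add_pos_pos)
  have "M*(c+1) > 0" using M c by simp
  then have Cpos: "C \<ge> 1" unfolding C_def using r by linarith
  have taupos: "\<tau> > 0" unfolding \<tau>_def using p Cpos by auto
  have Wder: "(W has_real_derivative (\<gamma> * D t * (W t - WQ) + \<gamma> * WQ * (D t)^2)) (at t)"
    if "0 < t" "t < T" "t \<notin> disc a" for t
  proof -
    have "(W has_real_derivative (vd t - ud t / c)) (at t)"
      unfolding W_def using der[OF that] c by (auto intro!: derivative_eq_intros)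
    moreover have "vd t - ud t / c = \<gamma> * D t * (W t - WQ) + \<gamma> * WQ * (D t)^2"
      unfolding vd_def ud_def \<gamma>_def WQ_def D_def W_def using W_ident[OF c r(1)] by simp
    ultimately show ?thesis by simp
  qed
  have Dder: "(D has_real_derivative (- ud t - vd t)) (at t)"
    if "0 < t" "t < T" "t \<notin> disc a" for t
    unfolding D_def using der[OF that] c by (auto intro!: derivative_eq_intros)
  have Tpos: "T > 0" using T vT p init by (cases "T = 0") auto
  have cD: "continuous_on {0..T} D" unfolding D_def using cu cv by (intro continuous_intros)
  then obtain B where B: "\<And>t. t \<in> {0..T} \<Longrightarrow> \<bar>D t\<bar> \<le> B"
    using bound_cont by blast
  obtain T' where T': "0 < T'" "T' \<le> T" "v T' \<le> 0" "\<And>t. t \<in> {0..<T'} \<Longrightarrow> v t > 0"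
    using first_zero[OF cv _ _ T] vT p init by auto
  have u0: "\<forall>t\<in>{0..T}. u t \<ge> 0"
  proof (rule barrier[OF T afin cu, of ud B])
    show "0 \<le> u 0" using init p by simp
    fix t assume t: "t \<in> {0<..<T} - disc a" and ut: "u t < 0"
    have "a t * c \<ge> 0" using apos[of t] c t by simp
    moreover have "D t \<le> B" using B[of t] t by auto
    ultimately have "D t - a t * c - B \<le> 0" by linarith
    then have "u t * (D t - a t * c - B) \<ge> 0" using ut by (simp add: mult_nonpos_nonpos)
    moreover have "ud t = u t * (D t - a t * c)" by (simp add: ud_def D_def algebra_simps)
    ultimately have "ud t \<ge> B * u t" by (simp add: algebra_simps)
    then show "(u has_real_derivative ud t) (at t) \<and> B * u t \<le> ud t" using der t by auto
  qed
  have cu': "continuous_on {0..T'} u" "continuous_on {0..T'} v"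
    using cu cv T' by (auto intro: continuous_on_subset)
  have u1: "\<forall>t\<in>{0..T'}. 1 - u t \<ge> 0"
  proof (rule barrier[OF less_imp_le[OF T'(1)] afin, of "\<lambda>t. 1 - u t" "\<lambda>t. - ud t" 0])
    show "continuous_on {0..T'} (\<lambda>t. 1 - u t)" using cu' by (intro continuous_intros)
    show "0 \<le> 1 - u 0" using init p by simp
    fix t assume t: "t \<in> {0<..<T'} - disc a" and ut: "1 - u t < 0"
    have vt: "v t > 0" using T'(4)[of t] t by auto
    have "a t * c \<ge> 0" using apos[of t] c t by simp
    then have "D t - a t * c < 0" using ut vt by (simp add: D_def)
    moreover have "ud t = u t * (D t - a t * c)" by (simp add: ud_def D_def algebra_simps)
    ultimately have "ud t \<le> 0" using ut mult_pos_neg[of "u t" "D t - a t * c"] by simp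
    moreover have "((\<lambda>t. 1 - u t) has_real_derivative - ud t) (at t)"
      using t T' der[of t] by (auto intro!: derivative_eq_intros)
    ultimately show "((\<lambda>t. 1 - u t) has_real_derivative - ud t) (at t) \<and> 0 * (1 - u t) \<le> - ud t" by simp
  qed
  have v1: "\<forall>t\<in>{0..T'}. 1 - v t \<ge> 0"
  proof (rule barrier[OF less_imp_le[OF T'(1)] afin, of "\<lambda>t. 1 - v t" "\<lambda>t. - vd t" 0])
    show "continuous_on {0..T'} (\<lambda>t. 1 - v t)" using cu' by (intro continuous_intros)
    show "0 \<le> 1 - v 0" using init p by simp
    fix t assume t: "t \<in> {0<..<T'} - disc a" and vt: "1 - v t < 0"
    have utt: "u t \<ge> 0" using u0 t T' by auto
    have "a t * u t \<ge> 0" using apos[of t] utt t by simp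
    moreover have "\<rho> * v t * (1 - u t - v t) < 0" using vt utt r by (simp add: mult_pos_neg)
    ultimately have "vd t \<le> 0" by (simp add: vd_def)
    moreover have "((\<lambda>t. 1 - v t) has_real_derivative - vd t) (at t)"
      using t T' der[of t] by (auto intro!: derivative_eq_intros)
    ultimately show "((\<lambda>t. 1 - v t) has_real_derivative - vd t) (at t) \<and> 0 * (1 - v t) \<le> - vd t" by simp
  qed
  have ub: "0 \<le> u t" "u t \<le> 1" "0 < v t" "v t \<le> 1" if "t \<in> {0..<T'}" for t
    using u0 u1 v1 T'(4)[OF that] that T' by auto
  have Dd_bd: "- ud t - vd t \<le> C" if t: "t \<in> {0<..<T'}" for t
  proof -
    have t0: "t \<in> {0..<T'}" using t by auto
    note b = ub[OF t0]
    have e: "- ud t - vd t = -((u t + \<rho> * v t) * D t) + (a t * u t) * (c+1)"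
      by (simp add: ud_def vd_def D_def algebra_simps)
    have "\<rho> * v t \<le> \<rho> * 1" using b r by (intro mult_left_mono) auto
    moreover have "\<rho> * v t \<ge> 0" using b r by simp
    ultimately have X: "0 \<le> u t + \<rho> * v t" "u t + \<rho> * v t \<le> 1 + \<rho>" using b by auto
    have "\<bar>D t\<bar> \<le> 1" using b by (auto simp: D_def)
    then have "-D t \<le> 1" by linarith
    then have "(u t + \<rho> * v t) * (- D t) \<le> (u t + \<rho> * v t) * 1"
      using X(1) by (intro mult_left_mono) auto
    then have "-((u t + \<rho> * v t) * D t) \<le> (u t + \<rho> * v t) * 1" by simp
    also have "... \<le> 1 + \<rho>" using X by simp
    finally have 1: "-((u t + \<rho> * v t) * D t) \<le> 1 + \<rho>" .
    have "a t \<le> M" "a t \<ge> 0" using abd[of t] apos[of t] t by auto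
    then have "a t * u t \<le> M * 1" using b by (intro mult_mono) auto
    then have 2: "(a t * u t) * (c+1) \<le> M * (c+1)" using c by (intro mult_right_mono) auto
    show ?thesis unfolding e C_def using 1 2 by linarith
  qed
  define \<tau>' where "\<tau>' = min \<tau> T'"
  have tau': "0 < \<tau>'" "\<tau>' \<le> \<tau>" "\<tau>' \<le> T'" using taupos T' by (auto simp: \<tau>'_def)
  have cD': "continuous_on {0..\<tau>'} D" "continuous_on {0..\<tau>'} W"
    using cu cv tau' T' c unfolding D_def W_def by (auto intro!: continuous_intros intro: continuous_on_subset)
  have Dup: "\<forall>t\<in>{0..\<tau>'}. D 0 + C * t - D t \<ge> 0"
  proof (rule barrier[OF less_imp_le[OF tau'(1)] afin, of _ "\<lambda>t. C - (- ud t - vd t)" 0])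
    show "continuous_on {0..\<tau>'} (\<lambda>t. D 0 + C * t - D t)" using cD' by (intro continuous_intros)
    show "0 \<le> D 0 + C * 0 - D 0" by simp
    fix t assume t: "t \<in> {0<..<\<tau>'} - disc a"
    then have t2: "0 < t" "t < T" "t \<notin> disc a" using tau' T' by auto
    have "((\<lambda>t. D 0 + C * t - D t) has_real_derivative C - (- ud t - vd t)) (at t)"
      using Dder[OF t2] by (auto intro!: derivative_eq_intros)
    moreover have "C - (- ud t - vd t) \<ge> 0" using Dd_bd[of t] t tau' by auto
    ultimately show "((\<lambda>t. D 0 + C * t - D t) has_real_derivative C - (- ud t - vd t)) (at t) \<and>
         0 * (D 0 + C * t - D t) \<le> C - (- ud t - vd t)" by simp
  qed
  have Dneg: "D t \<le> - \<delta>/2" if "t \<in> {0..\<tau>'}" for t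
  proof -
    have "D t \<le> D 0 + C * t" using Dup that by auto
    moreover have "D 0 \<le> -\<delta>" using p init by (simp add: D_def)
    moreover have "C * t \<le> C * \<tau>" using that tau' Cpos by (intro mult_left_mono) auto
    moreover have "C * \<tau> = \<delta>/2" unfolding \<tau>_def using Cpos by simp
    ultimately show ?thesis by linarith
  qed
  have Wup: "\<forall>t\<in>{0..\<tau>'}. W t - WQ + \<kappa> * (\<tau> - t) \<ge> 0"
  proof (rule barrier[OF less_imp_le[OF tau'(1)] afin, of _ "\<lambda>t. (\<gamma> * D t * (W t - WQ) + \<gamma> * WQ * (D t)^2) - \<kappa>" 0])
    show "continuous_on {0..\<tau>'} (\<lambda>t. W t - WQ + \<kappa> * (\<tau> - t))" using cD' by (intro continuous_intros)
    show "0 \<le> W 0 - WQ + \<kappa> * (\<tau> - 0)" using p init by (simp add: W_def)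
    fix t assume t: "t \<in> {0<..<\<tau>'} - disc a" and neg: "W t - WQ + \<kappa> * (\<tau> - t) < 0"
    then have t2: "0 < t" "t < T" "t \<notin> disc a" using tau' T' by auto
    have kpos: "\<kappa> \<ge> 0" unfolding \<kappa>_def using gpos WQpos by simp
    have "\<kappa> * (\<tau> - t) \<ge> 0" using kpos t tau' by simp
    then have Wn: "W t - WQ < 0" using neg by linarith
    have Dn: "D t \<le> - \<delta>/2" using Dneg[of t] t by auto
    have "D t * (W t - WQ) \<ge> 0" using Wn Dn p by (intro mult_nonpos_nonpos) auto
    then have 1: "\<gamma> * D t * (W t - WQ) \<ge> 0" using gpos by (simp add: mult.assoc)
    have "(\<delta>/2)^2 \<le> (- D t)^2" using Dn p by (intro power_mono) auto
    then have "\<delta>^2/4 \<le> (D t)^2" by (simp add: power2_eq_square)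
    then have "\<gamma> * WQ * (\<delta>^2/4) \<le> \<gamma> * WQ * (D t)^2" using gpos WQpos
      by (intro mult_left_mono) auto
    then have 2: "\<gamma> * WQ * (D t)^2 \<ge> \<kappa>" unfolding \<kappa>_def by simp
    have "((\<lambda>t. W t - WQ + \<kappa> * (\<tau> - t)) has_real_derivative (\<gamma> * D t * (W t - WQ) + \<gamma> * WQ * (D t)^2) - \<kappa>) (at t)"
      using Wder[OF t2] by (auto intro!: derivative_eq_intros)
    then show "((\<lambda>t. W t - WQ + \<kappa> * (\<tau> - t)) has_real_derivative (\<gamma> * D t * (W t - WQ) + \<gamma> * WQ * (D t)^2) - \<kappa>) (at t) \<and>
         0 * (W t - WQ + \<kappa> * (\<tau> - t)) \<le> (\<gamma> * D t * (W t - WQ) + \<gamma> * WQ * (D t)^2) - \<kappa>" using 1 2 by simp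
  qed
  have "W \<tau>' - WQ \<ge> - \<kappa> * \<tau>"
  proof -
    have kpos: "\<kappa> \<ge> 0" unfolding \<kappa>_def using gpos WQpos by simp
    have "W \<tau>' - WQ + \<kappa> * (\<tau> - \<tau>') \<ge> 0" using Wup tau' by auto
    moreover have "\<kappa> * (\<tau> - \<tau>') \<le> \<kappa> * \<tau>" using kpos tau' by (simp add: mult_left_mono)
    ultimately show ?thesis by linarith
  qed
  moreover have "u \<tau>' \<ge> 0" using u0 tau' T' by auto
  moreover have "u \<tau>' / c \<ge> 0" using \<open>u \<tau>' \<ge> 0\<close> c by simp
  ultimately have "v \<tau>' > 0" using p(9) unfolding W_def by linarith
  then have "\<tau>' \<noteq> T'" using T'(3) by auto
  then have tauT: "\<tau>' = \<tau>" "\<tau> < T'" using tau' by (auto simp: \<tau>'_def min_def split: if_splits)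
  have Wtau: "W \<tau> - WQ \<ge> 0" using Wup tau' tauT by (metis atLeastAtMost_iff diff_self less_imp_le mult_zero_right add_0_right order_refl)
  have cW2: "continuous_on {\<tau>..T'} (\<lambda>t. W t - WQ)"
    using cu cv tauT T' taupos c unfolding W_def by (auto intro!: continuous_intros intro: continuous_on_subset)
  have Wfin: "\<forall>t\<in>{\<tau>..T'}. W t - WQ \<ge> 0"
  proof (rule barrier[OF less_imp_le[OF tauT(2)] afin cW2, of "\<lambda>t. \<gamma> * D t * (W t - WQ) + \<gamma> * WQ * (D t)^2" "\<gamma> * B"])
    show "0 \<le> W \<tau> - WQ" by fact
    fix t assume t: "t \<in> {\<tau><..<T'} - disc a" and neg: "W t - WQ < 0"
    then have t2: "0 < t" "t < T" "t \<notin> disc a" using taupos T' by auto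
    have "D t \<le> B" using B[of t] t2 by auto
    then have "(D t - B) * (W t - WQ) \<ge> 0" using neg by (intro mult_nonpos_nonpos) auto
    then have "\<gamma> * ((D t - B) * (W t - WQ)) \<ge> 0" using gpos by simp
    moreover have "\<gamma> * WQ * (D t)^2 \<ge> 0" using gpos WQpos by simp
    moreover have "\<gamma> * D t * (W t - WQ) - \<gamma> * B * (W t - WQ) = \<gamma> * ((D t - B) * (W t - WQ))"
      by (simp add: algebra_simps)
    ultimately have "\<gamma> * D t * (W t - WQ) + \<gamma> * WQ * (D t)^2 \<ge> \<gamma> * B * (W t - WQ)"
      by linarith
    then show "((\<lambda>t. W t - WQ) has_real_derivative \<gamma> * D t * (W t - WQ) + \<gamma> * WQ * (D t)^2) (at t) \<and>
         \<gamma> * B * (W t - WQ) \<le> \<gamma> * D t * (W t - WQ) + \<gamma> * WQ * (D t)^2"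
      using Wder[OF t2] by (auto intro!: derivative_eq_intros)
  qed
  then have "W T' \<ge> WQ" using tauT by auto
  moreover have "u T' \<ge> 0" using u0 T' by auto
  moreover have "u T' / c \<ge> 0" using \<open>u T' \<ge> 0\<close> c by simp
  ultimately have "v T' > 0" using WQpos unfolding W_def by linarith
  then show False using T'(3) by simp
qed

lemma nonreach_gt1:
  fixes c \<rho> m M T u0 v0 \<epsilon> :: real
  defines "\<gamma> \<equiv> (\<rho>*c+1)/(c+1)" and "WQ \<equiv> (1-\<rho>)/(1+\<rho>*c)"
  defines "\<tau> \<equiv> min (min (1/(4*(1+\<rho>))) (u0/(2*M*c))) (1/\<gamma>)"
  defines "\<kappa> \<equiv> \<gamma>*(-WQ)*u0/8"
  assumes c: "c > 0" and r: "\<rho> > 1" and M: "M > 0" and m: "0 \<le> m"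
  assumes adm: "a \<in> admissible_mM m M" and sol: "solves_on c \<rho> a T u v" and T: "T \<ge> 0"
  assumes init: "u 0 = u0" "v 0 = v0" and vT: "v T = 0" and uT: "u T > 0"
  assumes p: "0 < u0" "u0 \<le> 1" "0 < v0" "v0 \<le> 1" "1 - u0 - v0 \<ge> 1/2"
     "v0 - u0/c \<ge> - \<epsilon>" "\<epsilon> \<le> \<kappa>*\<tau>/2"
  shows False
proof -
  have afin: "finite (disc a)" and apos: "\<And>t. t \<ge> 0 \<Longrightarrow> a t \<ge> 0"
    and abd: "\<And>t. t > 0 \<Longrightarrow> m \<le> a t \<and> a t \<le> M"
    using adm by (auto simp: admissible_mM_def admissible_def)
  have cu: "continuous_on {0..T} u" and cv: "continuous_on {0..T} v" using sol by (auto simp: solves_on_def)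
  define D where "D t = 1 - u t - v t" for t
  define W where "W t = v t - u t / c" for t
  define ud where "ud t = u t * (1 - u t - v t) - a t * c * u t" for t
  define vd where "vd t = \<rho> * v t * (1 - u t - v t) - a t * u t" for t
  have der: "(u has_real_derivative ud t) (at t)" "(v has_real_derivative vd t) (at t)"
    if "0 < t" "t < T" "t \<notin> disc a" for t
    using sol_deriv[OF sol that] by (auto simp: ud_def vd_def)
  have r0: "\<rho> > 0" using r by simp
  have gpos: "\<gamma> > 0" unfolding \<gamma>_def using c r by (auto intro!: divide_pos_pos add_pos_pos)
  have "1 + \<rho>*c > 0" using c r by (simp add: add_pos_pos)
  then have WQneg: "-WQ > 0" unfolding WQ_def using r by (simp add: divide_neg_pos)
  have WQc: "-WQ < 1/c"
  proof -
    have "1 + \<rho>*c > 0" using c r by (simp add: add_pos_pos)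
    moreover have "c * (\<rho> - 1) < 1 + \<rho> * c" using c by (simp add: algebra_simps)
    ultimately show ?thesis unfolding WQ_def using c by (simp add: field_simps)
  qed
  have taupos: "\<tau> > 0" unfolding \<tau>_def using p c M r gpos by auto
  have tau1: "\<tau> \<le> 1/(4*(1+\<rho>))" "\<tau> \<le> u0/(2*M*c)" "\<tau> \<le> 1/\<gamma>" unfolding \<tau>_def by auto
  have kpos: "\<kappa> > 0" unfolding \<kappa>_def using gpos WQneg p by (intro divide_pos_pos mult_pos_pos) auto
  have kt: "\<kappa>*\<tau>/2 < u0/(2*c)"
  proof -
    have "\<kappa>*\<tau> \<le> \<kappa>*(1/\<gamma>)" using kpos tau1 by (intro mult_left_mono) auto
    also have "... = (-WQ)*u0/8" unfolding \<kappa>_def using gpos by simp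
    also have "... < (1/c)*u0/8" using WQc p by (intro divide_strict_right_mono mult_strict_right_mono) auto
    finally show ?thesis using c p by (simp add: field_simps)
  qed
  have Wder: "(W has_real_derivative (\<gamma> * D t * W t + \<gamma> * (-WQ) * (D t * (1 - D t)))) (at t)"
    if "0 < t" "t < T" "t \<notin> disc a" for t
  proof -
    have "(W has_real_derivative (vd t - ud t / c)) (at t)"
      unfolding W_def using der[OF that] c by (auto intro!: derivative_eq_intros)
    moreover have "vd t - ud t / c = \<gamma> * D t * (W t - WQ) + \<gamma> * WQ * (D t)^2"
      unfolding vd_def ud_def \<gamma>_def WQ_def D_def W_def using W_ident[OF c r0] by simp
    moreover have "\<gamma> * D t * (W t - WQ) + \<gamma> * WQ * (D t)^2 = \<gamma> * D t * W t + \<gamma> * (-WQ) * (D t * (1 - D t))"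
      by (simp add: algebra_simps power2_eq_square)
    ultimately show ?thesis by simp
  qed
  have Dder: "(D has_real_derivative (- ud t - vd t)) (at t)"
    if "0 < t" "t < T" "t \<notin> disc a" for t
    unfolding D_def using der[OF that] c by (auto intro!: derivative_eq_intros)
  have Dde: "- ud t - vd t = -((u t + \<rho> * v t) * D t) + (a t * u t) * (c+1)" for t
    by (simp add: ud_def vd_def D_def algebra_simps)
  have ude: "ud t = u t * (D t - a t * c)" for t by (simp add: ud_def D_def algebra_simps)
  have Tpos: "T > 0" using T vT p init by (cases "T = 0") auto
  have cD: "continuous_on {0..T} D" unfolding D_def using cu cv by (intro continuous_intros)
  then obtain B where B: "\<And>t. t \<in> {0..T} \<Longrightarrow> \<bar>D t\<bar> \<le> B"
    using bound_cont by blast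
  obtain T' where T': "0 < T'" "T' \<le> T" "v T' \<le> 0" "\<And>t. t \<in> {0..<T'} \<Longrightarrow> v t > 0"
    using first_zero[OF cv _ _ T] vT p init by auto
  have u0: "\<forall>t\<in>{0..T}. u t \<ge> 0"
  proof (rule barrier[OF T afin cu, of ud B])
    show "0 \<le> u 0" using init p by simp
    fix t assume t: "t \<in> {0<..<T} - disc a" and ut: "u t < 0"
    have "a t * c \<ge> 0" using apos[of t] c t by simp
    moreover have "D t \<le> B" using B[of t] t by auto
    ultimately have "D t - a t * c - B \<le> 0" by linarith
    then have "u t * (D t - a t * c - B) \<ge> 0" using ut by (simp add: mult_nonpos_nonpos)
    then have "ud t \<ge> B * u t" unfolding ude by (simp add: algebra_simps)
    then show "(u has_real_derivative ud t) (at t) \<and> B * u t \<le> ud t" using der t by auto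
  qed
  have cu': "continuous_on {0..T'} u" "continuous_on {0..T'} v"
    using cu cv T' by (auto intro: continuous_on_subset)
  have u1: "\<forall>t\<in>{0..T'}. 1 - u t \<ge> 0"
  proof (rule barrier[OF less_imp_le[OF T'(1)] afin, of "\<lambda>t. 1 - u t" "\<lambda>t. - ud t" 0])
    show "continuous_on {0..T'} (\<lambda>t. 1 - u t)" using cu' by (intro continuous_intros)
    show "0 \<le> 1 - u 0" using init p by simp
    fix t assume t: "t \<in> {0<..<T'} - disc a" and ut: "1 - u t < 0"
    have vt: "v t > 0" using T'(4)[of t] t by auto
    have "a t * c \<ge> 0" using apos[of t] c t by simp
    then have "D t - a t * c < 0" using ut vt by (simp add: D_def)
    then have "ud t \<le> 0" using ut mult_pos_neg[of "u t" "D t - a t * c"] unfolding ude by simp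
    moreover have "((\<lambda>t. 1 - u t) has_real_derivative - ud t) (at t)"
      using t T' der[of t] by (auto intro!: derivative_eq_intros)
    ultimately show "((\<lambda>t. 1 - u t) has_real_derivative - ud t) (at t) \<and> 0 * (1 - u t) \<le> - ud t" by simp
  qed
  have v1: "\<forall>t\<in>{0..T'}. 1 - v t \<ge> 0"
  proof (rule barrier[OF less_imp_le[OF T'(1)] afin, of "\<lambda>t. 1 - v t" "\<lambda>t. - vd t" 0])
    show "continuous_on {0..T'} (\<lambda>t. 1 - v t)" using cu' by (intro continuous_intros)
    show "0 \<le> 1 - v 0" using init p by simp
    fix t assume t: "t \<in> {0<..<T'} - disc a" and vt: "1 - v t < 0"
    have utt: "u t \<ge> 0" using u0 t T' by auto
    have "a t * u t \<ge> 0" using apos[of t] utt t by simp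
    moreover have "\<rho> * v t * (1 - u t - v t) < 0" using vt utt r by (simp add: mult_pos_neg)
    ultimately have "vd t \<le> 0" by (simp add: vd_def)
    moreover have "((\<lambda>t. 1 - v t) has_real_derivative - vd t) (at t)"
      using t T' der[of t] by (auto intro!: derivative_eq_intros)
    ultimately show "((\<lambda>t. 1 - v t) has_real_derivative - vd t) (at t) \<and> 0 * (1 - v t) \<le> - vd t" by simp
  qed
  have ub: "0 \<le> u t" "u t \<le> 1" "0 < v t" "v t \<le> 1" if "t \<in> {0..<T'}" for t
    using u0 u1 v1 T'(4)[OF that] that T' by auto
  have cDT': "continuous_on {0..T'} D" using cD T' by (auto intro: continuous_on_subset)
  have D0: "\<forall>t\<in>{0..T'}. D t \<ge> 0"
  proof (rule barrier[OF less_imp_le[OF T'(1)] afin cDT', of "\<lambda>t. - ud t - vd t" 0])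
    show "0 \<le> D 0" using init p by (simp add: D_def)
    fix t assume t: "t \<in> {0<..<T'} - disc a" and Dt: "D t < 0"
    then have t2: "0 < t" "t < T" "t \<notin> disc a" using T' by auto
    note b = ub[of t]
    have "(u t + \<rho> * v t) \<ge> 0" using b t r by auto
    then have "-((u t + \<rho> * v t) * D t) \<ge> 0" using Dt by (simp add: mult_nonneg_nonpos)
    moreover have "(a t * u t) * (c+1) \<ge> 0" using apos[of t] b t c by simp
    ultimately have "- ud t - vd t \<ge> 0" unfolding Dde by linarith
    then show "(D has_real_derivative - ud t - vd t) (at t) \<and> 0 * D t \<le> - ud t - vd t"
      using Dder[OF t2] by simp
  qed
  have Dle1: "D t \<le> 1" if "t \<in> {0..<T'}" for t using ub[OF that] by (simp add: D_def)
  define \<tau>' where "\<tau>' = min \<tau> T'"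
  have tau': "0 < \<tau>'" "\<tau>' \<le> \<tau>" "\<tau>' \<le> T'" using taupos T' by (auto simp: \<tau>'_def)
  have cD': "continuous_on {0..\<tau>'} D" "continuous_on {0..\<tau>'} W" "continuous_on {0..\<tau>'} u"
    using cu cv tau' T' c unfolding D_def W_def by (auto intro!: continuous_intros intro: continuous_on_subset)
  have Dlow: "\<forall>t\<in>{0..\<tau>'}. D t - D 0 + (1+\<rho>) * t \<ge> 0"
  proof (rule barrier[OF less_imp_le[OF tau'(1)] afin, of _ "\<lambda>t. (- ud t - vd t) + (1+\<rho>)" 0])
    show "continuous_on {0..\<tau>'} (\<lambda>t. D t - D 0 + (1+\<rho>) * t)" using cD' by (intro continuous_intros)
    show "0 \<le> D 0 - D 0 + (1+\<rho>) * 0" by simp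
    fix t assume t: "t \<in> {0<..<\<tau>'} - disc a"
    then have t2: "0 < t" "t < T" "t \<notin> disc a" using tau' T' by auto
    have t0: "t \<in> {0..<T'}" using t tau' by auto
    note b = ub[OF t0]
    have "\<rho> * v t \<le> \<rho> * 1" using b r by (intro mult_left_mono) auto
    then have X: "0 \<le> u t + \<rho> * v t" "u t + \<rho> * v t \<le> 1 + \<rho>" using b r by (simp, linarith)
    have Dt: "0 \<le> D t" "D t \<le> 1" using D0 Dle1[OF t0] t0 by auto
    have "(u t + \<rho> * v t) * D t \<le> (1 + \<rho>) * 1" using X Dt by (intro mult_mono) auto
    moreover have "(a t * u t) * (c+1) \<ge> 0" using apos[of t] b t c by simp
    ultimately have "((1+\<rho>) - (u t + \<rho> * v t) * D t) + (a t * u t) * (c+1) \<ge> 0"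
      by (intro add_nonneg_nonneg) auto
    then have "(- ud t - vd t) + (1+\<rho>) \<ge> 0" unfolding Dde by (simp add: algebra_simps)
    moreover have "((\<lambda>t. D t - D 0 + (1+\<rho>) * t) has_real_derivative (- ud t - vd t) + (1+\<rho>)) (at t)"
      using Dder[OF t2] by (auto intro!: derivative_eq_intros)
    ultimately show "((\<lambda>t. D t - D 0 + (1+\<rho>) * t) has_real_derivative (- ud t - vd t) + (1+\<rho>)) (at t) \<and>
       0 * (D t - D 0 + (1+\<rho>) * t) \<le> (- ud t - vd t) + (1+\<rho>)" by simp
  qed
  have Dge: "D t \<ge> 1/4" if "t \<in> {0..\<tau>'}" for t
  proof -
    have "D t - D 0 + (1+\<rho>) * t \<ge> 0" using Dlow that by blast
    then have "D t \<ge> D 0 - (1+\<rho>) * t" by linarith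
    moreover have "D 0 \<ge> 1/2" using p init by (simp add: D_def)
    moreover have "(1+\<rho>) * t \<le> (1+\<rho>) * (1/(4*(1+\<rho>)))" using that tau' tau1 r by (intro mult_left_mono) auto
    moreover have "(1+\<rho>) * (1/(4*(1+\<rho>))) = 1/4" using r by simp
    ultimately show ?thesis by linarith
  qed
  have ulow: "\<forall>t\<in>{0..\<tau>'}. u t - u0 + M * c * t \<ge> 0"
  proof (rule barrier[OF less_imp_le[OF tau'(1)] afin, of _ "\<lambda>t. ud t + M * c" 0])
    show "continuous_on {0..\<tau>'} (\<lambda>t. u t - u0 + M * c * t)" using cD' by (intro continuous_intros)
    show "0 \<le> u 0 - u0 + M * c * 0" using init by simp
    fix t assume t: "t \<in> {0<..<\<tau>'} - disc a"
    then have t2: "0 < t" "t < T" "t \<notin> disc a" using tau' T' by auto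
    have t0: "t \<in> {0..<T'}" using t tau' by auto
    note b = ub[OF t0]
    have Dt: "0 \<le> D t" using D0 t0 by auto
    have "a t \<le> M" "a t \<ge> 0" using abd[of t] apos[of t] t by auto
    then have "a t * u t \<le> M * 1" using b by (intro mult_mono) auto
    then have "(a t * u t) * c \<le> M * c" using c by (intro mult_right_mono) auto
    moreover have "u t * D t \<ge> 0" using b Dt by simp
    moreover have "ud t = u t * D t - (a t * u t) * c" unfolding ude by (simp add: algebra_simps)
    ultimately have "ud t + M * c \<ge> 0" by linarith
    moreover have "((\<lambda>t. u t - u0 + M * c * t) has_real_derivative ud t + M * c) (at t)"
      using der(1)[OF t2] by (auto intro!: derivative_eq_intros)
    ultimately show "((\<lambda>t. u t - u0 + M * c * t) has_real_derivative ud t + M * c) (at t) \<and>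
       0 * (u t - u0 + M * c * t) \<le> ud t + M * c" by simp
  qed
  have uge: "u t \<ge> u0/2" if "t \<in> {0..\<tau>'}" for t
  proof -
    have "u t - u0 + M * c * t \<ge> 0" using ulow that by blast
    then have "u t \<ge> u0 - M * c * t" by linarith
    moreover have "M * c * t \<le> M * c * (u0/(2*M*c))" using that tau' tau1 M c by (intro mult_left_mono) auto
    moreover have "M * c * (u0/(2*M*c)) = u0/2" using M c by simp
    ultimately show ?thesis by linarith
  qed
  have Wup: "\<forall>t\<in>{0..\<tau>'}. W t + (\<kappa>/2) * (\<tau> - t) \<ge> 0"
  proof (rule barrier[OF less_imp_le[OF tau'(1)] afin, of _ "\<lambda>t. (\<gamma> * D t * W t + \<gamma> * (-WQ) * (D t * (1 - D t))) - \<kappa>/2" \<gamma>])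
    show "continuous_on {0..\<tau>'} (\<lambda>t. W t + (\<kappa>/2) * (\<tau> - t))" using cD' by (intro continuous_intros)
    show "0 \<le> W 0 + (\<kappa>/2) * (\<tau> - 0)" using p init by (simp add: W_def)
    fix t assume t: "t \<in> {0<..<\<tau>'} - disc a" and neg: "W t + (\<kappa>/2) * (\<tau> - t) < 0"
    then have t2: "0 < t" "t < T" "t \<notin> disc a" using tau' T' by auto
    have t0: "t \<in> {0..<T'}" using t tau' by auto
    note b = ub[OF t0]
    have "(\<kappa>/2) * (\<tau> - t) \<ge> 0" using kpos t tau' by simp
    then have Wn: "W t < 0" using neg by linarith
    have Dt: "1/4 \<le> D t" "D t \<le> 1" using Dge[of t] Dle1[OF t0] t by auto
    have "(1 - D t) * W t \<le> 0" using Dt Wn by (intro mult_nonneg_nonpos) auto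
    then have "D t * W t \<ge> W t" by (simp add: algebra_simps)
    then have 1: "\<gamma> * D t * W t \<ge> \<gamma> * W t" using gpos by (simp add: mult.assoc)
    have "1 - D t \<ge> u0/2" using uge[of t] t b by (simp add: D_def)
    then have "D t * (1 - D t) \<ge> (1/4) * (u0/2)" using Dt p by (intro mult_mono) auto
    moreover have "0 \<le> \<gamma> * (-WQ)" using gpos WQneg by (simp add: mult_pos_neg less_imp_le)
    ultimately have "\<gamma> * (-WQ) * (D t * (1 - D t)) \<ge> \<gamma> * (-WQ) * ((1/4) * (u0/2))"
      by (rule mult_left_mono)
    then have 2: "\<gamma> * (-WQ) * (D t * (1 - D t)) \<ge> \<kappa>" unfolding \<kappa>_def by simp
    have "\<gamma> * (\<tau> - t) \<le> \<gamma> * (1/\<gamma>)" using gpos tau1 t by (intro mult_left_mono) auto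
    then have 3: "\<gamma> * (\<tau> - t) \<le> 1" using gpos by simp
    have 4: "\<gamma> * ((\<kappa>/2) * (\<tau> - t)) \<le> \<kappa>/2"
      using mult_left_mono[OF 3, of "\<kappa>/2"] kpos by (simp add: algebra_simps)
    have "(\<gamma> * D t * W t + \<gamma> * (-WQ) * (D t * (1 - D t))) - \<kappa>/2 \<ge> \<gamma> * (W t + (\<kappa>/2) * (\<tau> - t))"
    proof -
      have "\<gamma> * (W t + (\<kappa>/2) * (\<tau> - t)) = \<gamma> * W t + \<gamma> * ((\<kappa>/2) * (\<tau> - t))"
        by (simp only: distrib_left)
      then show ?thesis using 1 2 4 by linarith
    qed
    moreover have "((\<lambda>t. W t + (\<kappa>/2) * (\<tau> - t)) has_real_derivative (\<gamma> * D t * W t + \<gamma> * (-WQ) * (D t * (1 - D t))) - \<kappa>/2) (at t)"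
      using Wder[OF t2] by (auto intro!: derivative_eq_intros)
    ultimately show "((\<lambda>t. W t + (\<kappa>/2) * (\<tau> - t)) has_real_derivative (\<gamma> * D t * W t + \<gamma> * (-WQ) * (D t * (1 - D t))) - \<kappa>/2) (at t) \<and>
       \<gamma> * (W t + (\<kappa>/2) * (\<tau> - t)) \<le> (\<gamma> * D t * W t + \<gamma> * (-WQ) * (D t * (1 - D t))) - \<kappa>/2" by simp
  qed
  have "W \<tau>' \<ge> - (\<kappa>/2) * \<tau>"
  proof -
    have "W \<tau>' + (\<kappa>/2) * (\<tau> - \<tau>') \<ge> 0" using Wup tau' by auto
    moreover have "(\<kappa>/2) * (\<tau> - \<tau>') \<le> (\<kappa>/2) * \<tau>" using kpos tau' by (simp add: mult_left_mono)
    ultimately show ?thesis by linarith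
  qed
  moreover have "u \<tau>' / c \<ge> (u0/2) / c" using uge[of \<tau>'] tau' c by (intro divide_right_mono) auto
  moreover have "(u0/2)/c = u0/(2*c)" by simp
  ultimately have "v \<tau>' > 0" using kt unfolding W_def by linarith
  then have "\<tau>' \<noteq> T'" using T'(3) by auto
  then have tauT: "\<tau>' = \<tau>" "\<tau> < T'" using tau' by (auto simp: \<tau>'_def min_def split: if_splits)
  have Wtau: "W \<tau> \<ge> 0" using Wup tau' tauT
    by (metis atLeastAtMost_iff diff_self less_imp_le mult_zero_right add_0_right order_refl)
  have cW2: "continuous_on {\<tau>..T'} W"
    using cu cv tauT T' taupos c unfolding W_def by (auto intro!: continuous_intros intro: continuous_on_subset)
  have Wfin: "\<forall>t\<in>{\<tau>..T'}. W t \<ge> 0"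
  proof (rule barrier[OF less_imp_le[OF tauT(2)] afin cW2, of "\<lambda>t. \<gamma> * D t * W t + \<gamma> * (-WQ) * (D t * (1 - D t))" \<gamma>])
    show "0 \<le> W \<tau>" by fact
    fix t assume t: "t \<in> {\<tau><..<T'} - disc a" and neg: "W t < 0"
    then have t2: "0 < t" "t < T" "t \<notin> disc a" using taupos T' by auto
    have t0: "t \<in> {0..<T'}" using t taupos by auto
    have Dt: "0 \<le> D t" "D t \<le> 1" using D0 Dle1[OF t0] t0 by auto
    have "(1 - D t) * W t \<le> 0" using Dt neg by (intro mult_nonneg_nonpos) auto
    then have "D t * W t \<ge> W t" by (simp add: algebra_simps)
    then have 1: "\<gamma> * D t * W t \<ge> \<gamma> * W t" using gpos by (simp add: mult.assoc)
    have "D t * (1 - D t) \<ge> 0" using Dt by simp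
    moreover have "0 \<le> \<gamma> * (-WQ)" using gpos WQneg by (simp add: mult_pos_neg less_imp_le)
    ultimately have 2: "\<gamma> * (-WQ) * (D t * (1 - D t)) \<ge> 0" by (metis mult_nonneg_nonneg)
    show "(W has_real_derivative \<gamma> * D t * W t + \<gamma> * (-WQ) * (D t * (1 - D t))) (at t) \<and>
         \<gamma> * W t \<le> \<gamma> * D t * W t + \<gamma> * (-WQ) * (D t * (1 - D t))"
      using Wder[OF t2] 1 2 by simp
  qed
  then have "W T' \<ge> 0" using tauT by auto
  moreover have uT'0: "u T' \<ge> 0" using u0 T' by auto
  ultimately have "u T' / c \<le> 0" using T'(3) unfolding W_def by linarith
  then have uT': "u T' = 0" using uT'0 c by (simp add: divide_le_0_iff)
  have cU: "continuous_on {T'..T} (\<lambda>t. - u t)" using cu T' by (auto intro!: continuous_intros intro: continuous_on_subset)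
  have "\<forall>t\<in>{T'..T}. - u t \<ge> 0"
  proof (rule barrier[OF T'(2) afin cU, of "\<lambda>t. - ud t" B])
    show "0 \<le> - u T'" using uT' by simp
    fix t assume t: "t \<in> {T'<..<T} - disc a" and neg: "- u t < 0"
    then have t2: "0 < t" "t < T" "t \<notin> disc a" using T' by auto
    have "a t * c \<ge> 0" using apos[of t] c t2 by simp
    moreover have "D t \<le> B" using B[of t] t2 by auto
    ultimately have "B - (D t - a t * c) \<ge> 0" by linarith
    then have "u t * (B - (D t - a t * c)) \<ge> 0" using neg by simp
    then have "- ud t \<ge> B * (- u t)" unfolding ude by (simp add: algebra_simps)
    then show "((\<lambda>t. - u t) has_real_derivative - ud t) (at t) \<and> B * (- u t) \<le> - ud t"
      using der(1)[OF t2] by (auto intro!: derivative_eq_intros)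
  qed
  then have "u T \<le> 0" using T' by auto
  then show False using uT by simp
qed

lemma gen_alg:
  fixes c \<rho> D g Dd gd U :: real
  assumes c: "c > 0" and r: "\<rho> > 0"
  assumes rel: "gd = ((\<rho>*c+1)/(c+1)) * D * g + (1-\<rho>) * Dd/(c+1)"
  assumes U: "U = c*(\<rho>*(1 - D) - g)/(\<rho>*c+1)" and U0: "U \<noteq> 0"
  shows "- c*(\<rho>*Dd + gd)/(\<rho>*c+1) = U*(1 - U - (1 - D + c*g)/(\<rho>*c+1)) - ((D - (- c*(\<rho>*Dd + gd)/(\<rho>*c+1))/U)/c)*c*U"
    and "(- Dd + c*gd)/(\<rho>*c+1) = \<rho>*((1 - D + c*g)/(\<rho>*c+1))*(1 - U - (1 - D + c*g)/(\<rho>*c+1)) - ((D - (- c*(\<rho>*Dd + gd)/(\<rho>*c+1))/U)/c)*U"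
    and "((D - (- c*(\<rho>*Dd + gd)/(\<rho>*c+1))/U)/c) = ((\<rho>*c+1)*Dd + \<rho>*(c+1)*D*(1-D) + c*(\<rho>-1)*D*g) / ((\<rho>*c+1)*(c+1)*U)"
proof -
  have h: "\<rho>*c+1 \<noteq> 0" "c + 1 \<noteq> 0" "c \<noteq> 0" using c r by (auto simp: add_pos_pos) (smt (verit) mult_pos_pos)
  show "- c*(\<rho>*Dd + gd)/(\<rho>*c+1) = U*(1 - U - (1 - D + c*g)/(\<rho>*c+1)) - ((D - (- c*(\<rho>*Dd + gd)/(\<rho>*c+1))/U)/c)*c*U"
    using h U0 unfolding U by (simp add: divide_simps) algebra
  show "(- Dd + c*gd)/(\<rho>*c+1) = \<rho>*((1 - D + c*g)/(\<rho>*c+1))*(1 - U - (1 - D + c*g)/(\<rho>*c+1)) - ((D - (- c*(\<rho>*Dd + gd)/(\<rho>*c+1))/U)/c)*U"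
    using h U0 unfolding U rel by (simp add: divide_simps) algebra
  show "((D - (- c*(\<rho>*Dd + gd)/(\<rho>*c+1))/U)/c) = ((\<rho>*c+1)*Dd + \<rho>*(c+1)*D*(1-D) + c*(\<rho>-1)*D*g) / ((\<rho>*c+1)*(c+1)*U)"
    using h U0 unfolding U rel by (simp add: divide_simps) algebra
qed

lemma witness_E:
  fixes D g Dd gd :: "real \<Rightarrow> real" and c \<rho> T u0 v0 :: real
  assumes c: "c > 0" and r: "\<rho> > 0" and T: "T > 0"
  assumes dD: "\<And>t. 0 \<le> t \<Longrightarrow> t \<le> T \<Longrightarrow> (D has_real_derivative Dd t) (at t)"
    and dg: "\<And>t. 0 \<le> t \<Longrightarrow> t \<le> T \<Longrightarrow> (g has_real_derivative gd t) (at t)"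
    and rel: "\<And>t. 0 \<le> t \<Longrightarrow> t \<le> T \<Longrightarrow> gd t = ((\<rho>*c+1)/(c+1)) * D t * g t + (1-\<rho>) * Dd t/(c+1)"
    and cont: "\<And>t. 0 \<le> t \<Longrightarrow> t \<le> T \<Longrightarrow> isCont Dd t \<and> isCont gd t"
    and upos: "\<And>t. 0 \<le> t \<Longrightarrow> t \<le> T \<Longrightarrow> \<rho>*(1 - D t) - g t > 0"
    and Npos: "\<And>t. 0 \<le> t \<Longrightarrow> t \<le> T \<Longrightarrow> (\<rho>*c+1)*Dd t + \<rho>*(c+1)*D t*(1 - D t) + c*(\<rho>-1)*D t*g t \<ge> 0"
    and vT: "1 - D T + c * g T = 0"
    and init: "u0 = c*(\<rho>*(1 - D 0) - g 0)/(\<rho>*c+1)" "v0 = (1 - D 0 + c*g 0)/(\<rho>*c+1)"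
      "0 \<le> u0" "u0 \<le> 1" "0 \<le> v0" "v0 \<le> 1" "(u0, v0) \<noteq> (0, 0)"
  shows "(u0, v0) \<in> V_set c \<rho> admissible"
proof -
  have h: "\<rho>*c+1 > 0" "c + 1 > 0" using c r by (auto simp: add_pos_pos)
  define u where "u t = c*(\<rho>*(1 - D t) - g t)/(\<rho>*c+1)" for t
  define v where "v t = (1 - D t + c*g t)/(\<rho>*c+1)" for t
  define ud where "ud t = - c*(\<rho>*Dd t + gd t)/(\<rho>*c+1)" for t
  define vd where "vd t = (- Dd t + c*gd t)/(\<rho>*c+1)" for t
  define A where "A t = (D t - ud t / u t)/c" for t
  define a where "a t = (if t \<le> T then A t else 0)" for t
  have upos': "u t > 0" if "0 \<le> t" "t \<le> T" for t
    unfolding u_def using upos[OF that] h c by (simp add: divide_pos_pos)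
  have du: "(u has_real_derivative ud t) (at t)" and dv: "(v has_real_derivative vd t) (at t)"
    if "0 \<le> t" "t \<le> T" for t
    unfolding u_def ud_def v_def vd_def using dD[OF that] dg[OF that] h
    by (auto intro!: derivative_eq_intros simp: divide_simps) (simp_all add: algebra_simps)
  have Acont: "isCont A t" if "0 \<le> t" "t \<le> T" for t
  proof -
    have "isCont D t" "isCont g t" using dD[OF that] dg[OF that] by (auto intro: DERIV_isCont)
    then show ?thesis unfolding A_def ud_def u_def using cont[OF that] upos'[OF that] c h
      by (auto intro!: continuous_intros simp: u_def)
  qed
  have Aeq: "A t = ((\<rho>*c+1)*Dd t + \<rho>*(c+1)*D t*(1 - D t) + c*(\<rho>-1)*D t*g t) / ((\<rho>*c+1)*(c+1)*u t)"
    if "0 \<le> t" "t \<le> T" for t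
    using gen_alg(3)[OF c r rel[OF that] u_def[of t] less_imp_neq[OF upos'[OF that], symmetric]]
    unfolding A_def ud_def by simp
  have Anon: "A t \<ge> 0" if "0 \<le> t" "t \<le> T" for t
    unfolding Aeq[OF that] using Npos[OF that] upos'[OF that] h by (simp add: divide_nonneg_pos)
  have disc: "disc a \<subseteq> {T}"
  proof
    fix t assume t: "t \<in> disc a"
    then have t0: "t \<ge> 0" and nc: "\<not> continuous (at t within {0..}) a" by (auto simp: disc_def)
    show "t \<in> {T}"
    proof (rule ccontr)
      assume tT: "t \<notin> {T}"
      have "isCont a t"
      proof (cases "t < T")
        case True
        have "eventually (\<lambda>x. x \<in> {..<T}) (nhds t)" using True by (intro eventually_nhds_in_open) auto
        then have "eventually (\<lambda>x. A x = a x) (nhds t)" by eventually_elim (auto simp: a_def)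
        then show ?thesis using Acont[of t] t0 True isCont_cong by fastforce
      next
        case False
        then have tt: "t > T" using tT by auto
        have "eventually (\<lambda>x. x \<in> {T<..}) (nhds t)" using tt by (intro eventually_nhds_in_open) auto
        then have "eventually (\<lambda>x. (\<lambda>_. 0::real) x = a x) (nhds t)" by eventually_elim (auto simp: a_def)
        then show ?thesis using isCont_cong continuous_const by fastforce
      qed
      then show False using nc continuous_at_imp_continuous_at_within by blast
    qed
  qed
  have adm: "a \<in> admissible"
    unfolding admissible_def using disc finite_subset Anon by (auto simp: a_def)
  have sol: "solves_on c \<rho> a T u v"
    unfolding solves_on_def
  proof (intro conjI allI impI)
    show "continuous_on {0..T} u" using du by (intro continuous_at_imp_continuous_on) (meson DERIV_isCont atLeastAtMost_iff)
    show "continuous_on {0..T} v" using dv by (intro continuous_at_imp_continuous_on) (meson DERIV_isCont atLeastAtMost_iff)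
    fix t assume t: "0 < t \<and> t < T \<and> t \<notin> disc a"
    then have t': "0 \<le> t" "t \<le> T" by auto
    have at: "a t = A t" using t by (simp add: a_def)
    have "ud t = u t * (1 - u t - v t) - A t * c * u t"
      using gen_alg(1)[OF c r rel[OF t'] u_def[of t] less_imp_neq[OF upos'[OF t'], symmetric]]
      unfolding ud_def[symmetric] v_def[symmetric] A_def[symmetric] .
    then have "ud t = u t * (1 - u t - v t) - a t * c * u t" unfolding at .
    then show "(u has_real_derivative u t * (1 - u t - v t) - a t * c * u t) (at t)" using du[OF t'] by simp
    have "vd t = \<rho> * v t * (1 - u t - v t) - A t * u t"
      using gen_alg(2)[OF c r rel[OF t'] u_def[of t] less_imp_neq[OF upos'[OF t'], symmetric]]
      unfolding ud_def[symmetric] v_def[symmetric] A_def[symmetric] vd_def[symmetric] .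
    then have "vd t = \<rho> * v t * (1 - u t - v t) - a t * u t" unfolding at .
    then show "(v has_real_derivative \<rho> * v t * (1 - u t - v t) - a t * u t) (at t)" using dv[OF t'] by simp
  qed
  have f: "u 0 = u0" "v 0 = v0" "v T = 0" "u T > 0"
    using init(1,2) vT upos'[of T] T h by (auto simp: u_def v_def)
  have "\<exists>T'\<ge>0. \<exists>u' v'. solves_on c \<rho> a T' u' v' \<and> u' 0 = u0 \<and> v' 0 = v0 \<and> v' T' = 0 \<and> u' T' > 0"
    using sol f T less_imp_le by blast
  then have "(u0, v0) \<in> E_set c \<rho> a"
    unfolding E_set_def using init(3-7) by auto
  then show ?thesis unfolding V_set_def using adm by auto
qed

lemma first_zero_exact:
  fixes F :: "real \<Rightarrow> real"
  assumes "continuous_on {0..b} F" "F 0 < 0" "F b > 0" "b \<ge> 0"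
  shows "\<exists>T. 0 < T \<and> T \<le> b \<and> F T = 0 \<and> (\<forall>t\<in>{0..<T}. F t < 0)"
proof -
  have "continuous_on {0..b} (\<lambda>t. - F t)" using assms(1) by (intro continuous_intros)
  then obtain T where T: "0 < T" "T \<le> b" "- F T \<le> 0" "\<And>t. t \<in> {0..<T} \<Longrightarrow> - F t > 0"
    using first_zero[of b "\<lambda>t. - F t"] assms by auto
  have "F T = 0"
  proof (rule ccontr)
    assume "F T \<noteq> 0"
    then have FT: "F T > 0" using T by auto
    have "continuous_on {0..T} F" using assms(1) T by (auto intro: continuous_on_subset)
    then obtain s where s: "0 \<le> s" "s \<le> T" "F s = 0" using IVT'[of F 0 0 T] assms FT T by auto
    then have "s \<noteq> T" using FT by auto
    then show False using T(4)[of s] s by auto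
  qed
  then show ?thesis using T by auto
qed

lemma witness_gt1:
  fixes c \<rho> \<epsilon> :: real
  defines "w \<equiv> 1/(2*(c+1))"
  assumes c: "c > 0" and r: "\<rho> > 1" and e: "\<epsilon> > 0" "\<epsilon> \<le> (\<rho>-1)*w/(2*\<rho>)" "\<epsilon> \<le> w/2"
  shows "(c*w, w - \<epsilon>) \<in> V_set c \<rho> admissible"
proof -
  define \<gamma> where "\<gamma> = (\<rho>*c+1)/(c+1)"
  define u0 where "u0 = c*w"
  define v0 where "v0 = w - \<epsilon>"
  define D0 where "D0 = 1 - u0 - v0"
  define g0 where "g0 = \<rho>* v0 - u0/c"
  define k where "k = min (1/2) (\<epsilon>*(\<rho>*c+1)/(2*\<rho>))"
  define \<alpha> where "\<alpha> = (1-\<rho>)/((c+1)*k)"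
  define Dw where "Dw t = D0 * exp (\<gamma>*t/k)" for t
  define Dd where "Dd t = (\<gamma>/k) * Dw t" for t
  define gw where "gw t = (g0 + \<alpha>) * exp (k * (Dw t - D0)) - \<alpha>" for t
  define gd where "gd t = (g0 + \<alpha>) * exp (k * (Dw t - D0)) * (k * Dd t)" for t
  define vv where "vv t = 1 - Dw t + c * gw t" for t
  define WW where "WW t = (1-\<rho>) * (1 - Dw t) + (c+1) * gw t" for t
  define te where "te = (k/\<gamma>) * ln (1/D0)"
  have r0: "\<rho> > 0" using r by simp
  have h: "\<rho>*c+1 > 0" "c+1 > 0" using c r by (auto simp: add_pos_pos)
  have gpos: "\<gamma> > 0" unfolding \<gamma>_def using h by simp
  have wpos: "w > 0" "(c+1)*w = 1/2" unfolding w_def using c by auto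
  have D0v: "D0 = 1/2 + \<epsilon>" unfolding D0_def u0_def v0_def using wpos by (simp add: algebra_simps)
  have eps_half: "\<epsilon> < 1/2"
  proof -
    have "w \<le> 1/2" unfolding w_def using c by (simp add: field_simps)
    then show ?thesis using e wpos by linarith
  qed
  have D0b: "0 < D0" "D0 < 1" using D0v e eps_half by auto
  have kpos: "k > 0" unfolding k_def using e h r by (auto intro!: divide_pos_pos mult_pos_pos)
  have kle: "k \<le> 1/2" "k \<le> \<epsilon>*(\<rho>*c+1)/(2*\<rho>)" unfolding k_def by auto
  have g0v: "g0 = (\<rho>-1)*w - \<rho>*\<epsilon>" unfolding g0_def u0_def v0_def using c by (simp add: algebra_simps)
  have g0b: "0 \<le> g0" "g0 \<le> (\<rho>-1)*w"
  proof -
    have "\<rho>*\<epsilon> \<le> \<rho>*((\<rho>-1)*w/(2*\<rho>))" using e r by (intro mult_left_mono) auto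
    also have "... = (\<rho>-1)*w/2" using r by simp
    moreover have "(\<rho>-1)*w \<ge> 0" using r wpos by simp
    ultimately show "0 \<le> g0" unfolding g0v by linarith
    show "g0 \<le> (\<rho>-1)*w" unfolding g0v using r e by simp
  qed
  have alpha: "g0 + \<alpha> < 0"
  proof -
    have "(\<rho>-1)/((c+1)*k) \<ge> (\<rho>-1)/((c+1)*(1/2))" using kle kpos h r
      by (intro divide_left_mono mult_left_mono mult_pos_pos) auto
    moreover have "(\<rho>-1)/((c+1)*(1/2)) = 4 * ((\<rho>-1)*w)" unfolding w_def using h by (simp add: field_simps)
    moreover have "(\<rho>-1)*w > 0" using r wpos by simp
    ultimately have "g0 < (\<rho>-1)/((c+1)*k)" using g0b by linarith
    moreover have "\<alpha> = - ((\<rho>-1)/((c+1)*k))" unfolding \<alpha>_def by (simp add: minus_divide_left)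
    ultimately show ?thesis by linarith
  qed
  have kg: "k * Dd t = \<gamma> * Dw t" for t unfolding Dd_def using kpos by simp
  have kne: "k \<noteq> 0" "c + 1 \<noteq> 0" using kpos h by auto
  have ka: "\<alpha> * k = (1-\<rho>)/(c+1)" unfolding \<alpha>_def using kne by (simp add: divide_simps)
  have Dw0: "Dw 0 = D0" "gw 0 = g0" by (simp_all add: Dw_def gw_def)
  have lnpos: "ln (1/D0) > 0" using D0b by simp
  have tepos: "te > 0" unfolding te_def using kpos gpos lnpos by simp
  have Dwb: "D0 \<le> Dw t" "Dw t \<le> 1" if "0 \<le> t" "t \<le> te" for t
  proof -
    have "\<gamma>*t/k \<ge> 0" using that gpos kpos by simp
    then show "D0 \<le> Dw t" unfolding Dw_def using D0b by simp
    have "\<gamma>*t/k \<le> \<gamma>*te/k" using that gpos kpos by (intro divide_right_mono mult_left_mono) auto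
    also have "\<gamma>*te/k = ln (1/D0)" unfolding te_def using gpos kpos by simp
    finally have "exp (\<gamma>*t/k) \<le> 1/D0" using D0b by (metis exp_le_cancel_iff exp_ln zero_less_divide_1_iff)
    then show "Dw t \<le> 1" unfolding Dw_def using D0b by (simp add: field_simps)
  qed
  have Dwte: "Dw te = 1"
  proof -
    have "\<gamma>*te/k = ln (1/D0)" unfolding te_def using gpos kpos by simp
    then show ?thesis unfolding Dw_def using D0b by simp
  qed
  have WW0: "(1-\<rho>)*(1-D0) + (c+1)*g0 = - \<epsilon>*(\<rho>*c+1)"
    unfolding D0_def g0_def u0_def v0_def using c h by (simp add: field_simps)
  have WWneg: "WW t < 0" if "0 \<le> t" "t \<le> te" for t
  proof -
    define \<Delta> where "\<Delta> = Dw t - D0"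
    define E where "E = exp (k * \<Delta>)"
    have \<Delta>b: "0 \<le> \<Delta>" "\<Delta> \<le> 1/2" unfolding \<Delta>_def using Dwb[OF that] D0v e by auto
    have E1: "E \<ge> 1 + k * \<Delta>" unfolding E_def by simp
    have "\<bar>k * \<Delta>\<bar> \<le> 1/2"
    proof -
      have "k * \<Delta> \<le> (1/2) * 1" using kle \<Delta>b kpos by (intro mult_mono) auto
      then show ?thesis using kpos \<Delta>b by simp
    qed
    then have "norm (exp (k * \<Delta>)) \<le> 1 + 2 * norm (k * \<Delta>)" by (intro exp_bound_lemma) simp
    then have "E \<le> 1 + 2 * (k * \<Delta>)" unfolding E_def using kpos \<Delta>b by simp
    moreover have "2 * (k * \<Delta>) \<le> k" using kpos \<Delta>b by simp
    ultimately have E2: "E - 1 \<le> k" by linarith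
    have id: "WW t = -\<epsilon>*(\<rho>*c+1) + (c+1)*g0*(E-1) - ((\<rho>-1)/k)*(E - 1 - k*\<Delta>)"
    proof -
      have ca: "(c+1)*\<alpha> = (1-\<rho>)/k" unfolding \<alpha>_def using h kpos by simp
      have "WW t = ((1-\<rho>)*(1-D0) + (c+1)*g0) + (c+1)*g0*(E-1) + ((c+1)*\<alpha>)*(E-1) - (1-\<rho>)*\<Delta>"
        unfolding WW_def gw_def E_def \<Delta>_def by (simp add: algebra_simps)
      also have "... = -\<epsilon>*(\<rho>*c+1) + (c+1)*g0*(E-1) + ((1-\<rho>)/k)*(E-1) - (1-\<rho>)*\<Delta>"
        by (simp only: WW0 ca)
      also have "... = -\<epsilon>*(\<rho>*c+1) + (c+1)*g0*(E-1) - ((\<rho>-1)/k)*(E - 1 - k*\<Delta>)"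
        using kne by (simp add: divide_simps) algebra
      finally show ?thesis .
    qed
    have "((\<rho>-1)/k)*(E - 1 - k*\<Delta>) \<ge> 0" using E1 r kpos by simp
    moreover have "(c+1)*g0*(E-1) \<le> (c+1)*g0*k" using E2 g0b h by (intro mult_left_mono) auto
    moreover have "(c+1)*g0*k \<le> (c+1)*((\<rho>-1)*w)*k" using g0b h kpos by (intro mult_right_mono mult_left_mono) auto
    moreover have "(c+1)*((\<rho>-1)*w)*k = (\<rho>-1)*k/2"
    proof -
      have "(c+1)*((\<rho>-1)*w)*k = ((c+1)*w)*((\<rho>-1)*k)" by (simp add: algebra_simps)
      then show ?thesis unfolding wpos(2) by simp
    qed
    moreover have "(\<rho>-1)*k/2 \<le> (\<rho>-1)*(\<epsilon>*(\<rho>*c+1)/(2*\<rho>))/2" using kle r by (intro divide_right_mono mult_left_mono) auto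
    moreover have "(\<rho>-1)*(\<epsilon>*(\<rho>*c+1)/(2*\<rho>))/2 < \<epsilon>*(\<rho>*c+1)"
    proof -
      have "(\<rho>-1)/(4*\<rho>) < 1" using r by simp
      then have "((\<rho>-1)/(4*\<rho>)) * (\<epsilon>*(\<rho>*c+1)) < 1 * (\<epsilon>*(\<rho>*c+1))" using e h by (intro mult_strict_right_mono) auto
      then show ?thesis by (simp add: field_simps)
    qed
    ultimately show ?thesis unfolding id by linarith
  qed
  have vv0: "vv 0 > 0"
  proof -
    have "vv 0 = (\<rho>*c+1) * v0" unfolding vv_def Dw0 D0_def g0_def using c by (simp add: field_simps)
    moreover have "v0 > 0" unfolding v0_def using e wpos by linarith
    ultimately show ?thesis using h by simp
  qed
  have vvte: "vv te < 0"
  proof -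
    have "WW te = (c+1) * gw te" unfolding WW_def Dwte by simp
    then have "gw te < 0" using WWneg[of te] tepos h by (simp add: mult_less_0_iff)
    then show ?thesis unfolding vv_def Dwte using c by (simp add: mult_pos_neg)
  qed
  have cvv: "continuous_on {0..te} (\<lambda>t. - vv t)" unfolding vv_def gw_def Dw_def using kne by (intro continuous_intros) auto
  obtain T where T: "0 < T" "T \<le> te" "vv T = 0" "\<And>t. t \<in> {0..<T} \<Longrightarrow> vv t > 0"
    using first_zero_exact[OF cvv] vv0 vvte tepos by fastforce
  have vvnn: "vv t \<ge> 0" if "0 \<le> t" "t \<le> T" for t
  proof (cases "t = T")
    case False
    then have "t \<in> {0..<T}" using that by auto
    then show ?thesis using T(4) less_imp_le by blast
  qed (use T in auto)
  have "(u0, v0) \<in> V_set c \<rho> admissible"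
  proof (rule witness_E[OF c r0 T(1), of Dw Dd gw gd])
    fix t assume t: "0 \<le> t" "t \<le> T"
    then have tt: "0 \<le> t" "t \<le> te" using T by auto
    show "(Dw has_real_derivative Dd t) (at t)" unfolding Dw_def Dd_def using kne
      by (auto intro!: derivative_eq_intros)
    show "(gw has_real_derivative gd t) (at t)" unfolding gw_def gd_def Dd_def Dw_def using kne
      by (auto intro!: derivative_eq_intros)
    show "gd t = ((\<rho>*c+1)/(c+1)) * Dw t * gw t + (1-\<rho>) * Dd t/(c+1)"
    proof -
      have "gd t = (gw t + \<alpha>) * (k * Dd t)" unfolding gd_def gw_def by simp
      also have "... = gw t * (\<gamma> * Dw t) + (\<alpha> * k) * Dd t" unfolding kg[symmetric] by (simp add: algebra_simps)
      finally show ?thesis unfolding ka \<gamma>_def by (simp add: algebra_simps)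
    qed
    show "isCont Dd t \<and> isCont gd t" unfolding gd_def Dd_def Dw_def using kne by (auto intro!: continuous_intros)
    have "\<rho>*(1 - Dw t) - gw t = vv t - WW t" unfolding vv_def WW_def by (simp add: algebra_simps)
    then show "\<rho>*(1 - Dw t) - gw t > 0" using vvnn[OF t] WWneg[OF tt] by simp
    have Db: "0 \<le> Dw t" "Dw t \<le> 1" using Dwb[OF tt] D0b by auto
    have Ddp: "Dd t \<ge> 0" unfolding Dd_def using gpos kpos Db by simp
    have "c * gw t \<ge> -(1 - Dw t)" using vvnn[OF t] unfolding vv_def by simp
    then have "((\<rho>-1)*Dw t) * (c * gw t) \<ge> ((\<rho>-1)*Dw t) * (-(1 - Dw t))" using r Db by (intro mult_left_mono) auto
    moreover have "Dw t * (1 - Dw t) \<ge> 0" using Db by simp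
    ultimately have "(\<rho>*c+1)*Dd t + \<rho>*(c+1)*Dw t*(1 - Dw t) + c*(\<rho>-1)*Dw t*gw t \<ge> (\<rho>*c+1)*Dd t + (\<rho>*c+1)*(Dw t*(1 - Dw t))"
      by (simp add: algebra_simps)
    moreover have "(\<rho>*c+1)*Dd t + (\<rho>*c+1)*(Dw t*(1 - Dw t)) \<ge> 0" using h Ddp \<open>Dw t * (1 - Dw t) \<ge> 0\<close> by simp
    ultimately show "(\<rho>*c+1)*Dd t + \<rho>*(c+1)*Dw t*(1 - Dw t) + c*(\<rho>-1)*Dw t*gw t \<ge> 0" by linarith
  next
    show "1 - Dw T + c * gw T = 0" using T(3) unfolding vv_def .
    have "c*(\<rho>*(1 - D0) - g0) = (\<rho>*c+1)*u0" unfolding D0_def g0_def using c by (simp add: field_simps)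
    then show "u0 = c*(\<rho>*(1 - Dw 0) - gw 0)/(\<rho>*c+1)" unfolding Dw0 using h by simp
    have "1 - D0 + c*g0 = (\<rho>*c+1)* v0" unfolding D0_def g0_def using c by (simp add: field_simps)
    then show "v0 = (1 - Dw 0 + c*gw 0)/(\<rho>*c+1)" unfolding Dw0 using h by simp
    have w2: "w \<le> 1/2" unfolding w_def using c by (simp add: field_simps)
    have cw: "c*w \<le> 1" unfolding w_def using c by (simp add: field_simps)
    show "0 \<le> u0" "u0 \<le> 1" "0 \<le> v0" "v0 \<le> 1" "(u0, v0) \<noteq> (0, 0)"
      unfolding u0_def v0_def using c e wpos w2 cw by auto
  qed
  then show ?thesis unfolding u0_def v0_def .
qed

lemma notin_V:
  assumes "\<And>a T u v. a \<in> admissible_mM m M \<Longrightarrow> solves_on c \<rho> a T u v \<Longrightarrow> T \<ge> 0 \<Longrightarrow>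
     u 0 = u0 \<Longrightarrow> v 0 = v0 \<Longrightarrow> v T = 0 \<Longrightarrow> u T > 0 \<Longrightarrow> False"
  shows "(u0, v0) \<notin> V_set c \<rho> (admissible_mM m M)"
  using assms unfolding V_set_def E_set_def by blast

lemma main_gt1:
  fixes c \<rho> m M :: real
  assumes c: "c > 0" and r: "\<rho> > 1" and M: "M > 0" and m: "0 \<le> m"
  shows "\<exists>p. p \<in> V_set c \<rho> admissible \<and> p \<notin> V_set c \<rho> (admissible_mM m M)"
proof -
  define w where "w = 1/(2*(c+1))"
  define \<gamma> where "\<gamma> = (\<rho>*c+1)/(c+1)"
  define WQ where "WQ = (1-\<rho>)/(1+\<rho>*c)"
  define u0 where "u0 = c*w"
  define \<tau> where "\<tau> = min (min (1/(4*(1+\<rho>))) (u0/(2*M*c))) (1/\<gamma>)"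
  define \<kappa> where "\<kappa> = \<gamma>*(-WQ)*u0/8"
  define \<epsilon> where "\<epsilon> = min (min ((\<rho>-1)*w/(2*\<rho>)) (w/2)) (\<kappa>*\<tau>/2)"
  have h: "\<rho>*c+1 > 0" "c+1 > 0" using c r by (auto simp: add_pos_pos)
  have wpos: "w > 0" unfolding w_def using c by simp
  have u0p: "u0 > 0" unfolding u0_def using c wpos by simp
  have gpos: "\<gamma> > 0" unfolding \<gamma>_def using h by simp
  have "1 + \<rho>*c > 0" using h by (simp add: add.commute mult.commute)
  then have WQneg: "-WQ > 0" unfolding WQ_def using r by (simp add: divide_neg_pos)
  have taupos: "\<tau> > 0" unfolding \<tau>_def using u0p c M r gpos by auto
  have kpos: "\<kappa> > 0" unfolding \<kappa>_def using gpos WQneg u0p by (intro divide_pos_pos mult_pos_pos) auto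
  have epos: "\<epsilon> > 0" unfolding \<epsilon>_def using r wpos kpos taupos by auto
  have eb: "\<epsilon> \<le> (\<rho>-1)*w/(2*\<rho>)" "\<epsilon> \<le> w/2" "\<epsilon> \<le> \<kappa>*\<tau>/2" unfolding \<epsilon>_def by auto
  have inV: "(c*w, w - \<epsilon>) \<in> V_set c \<rho> admissible"
    using witness_gt1[OF c r epos] eb unfolding w_def by simp
  have w2: "w \<le> 1/2" unfolding w_def using c by (simp add: field_simps)
  have cw: "c*w \<le> 1" unfolding w_def using c by (simp add: field_simps)
  have cw1: "(c+1)*w = 1/2" unfolding w_def using c by simp
  have notin: "(c*w, w - \<epsilon>) \<notin> V_set c \<rho> (admissible_mM m M)"
  proof (rule notin_V)
    fix a T u v
    assume a: "a \<in> admissible_mM m M" "solves_on c \<rho> a T u v" "T \<ge> 0" "u 0 = c*w" "v 0 = w - \<epsilon>" "v T = 0" "u T > 0"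
    show False
    proof (rule nonreach_gt1[OF c r M m a(1,2,3) a(4,5,6,7)])
      show "0 < c*w" "c*w \<le> 1" "0 < w - \<epsilon>" "w - \<epsilon> \<le> 1" using u0p cw eb wpos w2 epos unfolding u0_def by auto
      have "1 - c*w - (w - \<epsilon>) = 1 - (c+1)*w + \<epsilon>" by (simp add: algebra_simps)
      then show "1 - c*w - (w - \<epsilon>) \<ge> 1/2" using cw1 epos by simp
      show "w - \<epsilon> - c*w/c \<ge> - \<epsilon>" using c by simp
      show "\<epsilon> \<le> ((\<rho>*c+1)/(c+1)) * (-((1-\<rho>)/(1+\<rho>*c))) * (c*w)/8 *
          min (min (1/(4*(1+\<rho>))) ((c*w)/(2*M*c))) (1/((\<rho>*c+1)/(c+1))) / 2"
        using eb(3) unfolding \<kappa>_def \<tau>_def \<gamma>_def WQ_def u0_def .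
    qed
  qed
  show ?thesis using inV notin by blast
qed

locale wlt1 =
  fixes c \<rho> \<epsilon> :: real
  assumes c: "c > 0" and r: "\<rho> > 0" "\<rho> < 1" and e: "\<epsilon> > 0" "\<epsilon> \<le> 1/(4*c)"
begin

definition "\<delta> = \<rho>*c/(2*(1+c^2))"
definition "A = (c+1)/(1-\<rho>)"
definition "\<gamma> = (\<rho>*c+1)/(c+1)"
definition "ee = \<gamma>*\<epsilon>"
definition "B = \<delta>/ee + 1"
definition "K1 = (c+1)*(1 + B*ee) + c*(1+B)*ee"
definition "lam = B*K1"
definition "w t = 1 + lam*t" for t
definition "\<theta> t = -1 + B/(w t)^2" for t
definition "\<theta>' t = -2*B*lam/(w t)^3" for t
definition "\<Phi> t = -(1 - 1/A)*t + (B/lam)*(1 - 1/w t)*(1 - 2/A) + (B^2/(3*lam*A))*(1 - 1/(w t)^3)" for t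
definition "R t = -1/ee - \<gamma> * \<Phi> t" for t
definition "R' t = -\<gamma> * (\<theta> t + (\<theta> t)^2/A)" for t
definition "coef t = c*(1 + \<theta> t/A) - \<theta> t" for t
definition "F t = R t + coef t" for t

lemma basic:
  shows "\<delta> > 0" "\<delta> \<le> 1/4" "A > 1" "A > c" "\<gamma> > 0" "\<gamma> \<le> 1" "ee > 0" "ee \<le> 1/(4*c)"
    "B > 1" "K1 > 0" "lam > 0" "c*\<delta> \<le> 1/2" "\<delta> \<le> \<rho>*c"
proof -
  have h: "\<rho>*c+1 > 0" "c+1 > 0" "1-\<rho> > 0" "1 + \<rho>*c > 0" "1 + c > 0" using c r by (auto simp: add_pos_pos)
  have p2: "1 + c^2 > 0" by (simp add: add_pos_nonneg)
  show dp: "\<delta> > 0" unfolding \<delta>_def using c r p2 by (auto intro!: divide_pos_pos)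
  have "0 \<le> (c-1)*(c-1)" by simp
  also have "(c-1)*(c-1) = 1 + c^2 - 2*c" by (simp add: power2_eq_square algebra_simps)
  finally have "2*c \<le> 1 + c^2" by simp
  then have "c/(1+c^2) \<le> 1/2" using p2 by (simp add: divide_simps)
  then have "\<rho> * (c/(1+c^2)) \<le> 1 * (1/2)" using r c by (intro mult_mono) auto
  moreover have "\<delta> = (\<rho> * (c/(1+c^2)))/2" unfolding \<delta>_def by simp
  moreover have "\<And>x d::real. x \<le> 1 * (1/2) \<Longrightarrow> d = x/2 \<Longrightarrow> d \<le> 1/4" by simp
  ultimately show "\<delta> \<le> 1/4" by blast
  have "c*c \<le> 1 + c^2" by (simp add: power2_eq_square)
  then have "c*c/(1+c^2) \<le> 1" using p2 by (simp add: divide_simps)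
  then have "\<rho> * (c*c/(1+c^2)) \<le> 1 * 1" using r c by (intro mult_mono) auto
  moreover have "c*\<delta> = (\<rho> * (c*c/(1+c^2)))/2" unfolding \<delta>_def by (simp add: algebra_simps)
  moreover have "\<And>x d::real. x \<le> 1 * 1 \<Longrightarrow> d = x/2 \<Longrightarrow> d \<le> 1/2" by simp
  ultimately show "c*\<delta> \<le> 1/2" by blast
  have "1 \<le> 2*(1+c^2)" by (simp add: add_pos_pos)
  then have "\<rho>*c/(2*(1+c^2)) \<le> \<rho>*c/1" using c r p2 by (intro divide_left_mono) auto
  then show "\<delta> \<le> \<rho>*c" unfolding \<delta>_def by simp
  have "c + 1 > 1 - \<rho>" using c r by simp
  then show "A > 1" unfolding A_def using h by simp
  have "c*(1-\<rho>) < c + 1" using c r h by (simp add: algebra_simps)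
  then show "A > c" unfolding A_def using h by (simp add: field_simps)
  show gp: "\<gamma> > 0" unfolding \<gamma>_def using h by simp
  show "\<gamma> \<le> 1" unfolding \<gamma>_def using h r c by simp
  then have "ee \<le> \<epsilon>" unfolding ee_def using e gp by (simp add: mult_left_le_one_le)
  then show "ee \<le> 1/(4*c)" using e by simp
  show ep: "ee > 0" unfolding ee_def using gp e by simp
  show Bp: "B > 1" unfolding B_def using dp ep by simp
  have "(c+1)*(1 + B*ee) > 0" using Bp ep c by (intro mult_pos_pos add_pos_pos) auto
  moreover have "c*(1+B)*ee \<ge> 0" using Bp ep c by simp
  ultimately show "K1 > 0" unfolding K1_def by linarith
  then show "lam > 0" unfolding lam_def using Bp by simp
qed


lemma w_ge: "t \<ge> 0 \<Longrightarrow> w t \<ge> 1"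
  unfolding w_def using basic by simp

lemma theta_bd:
  assumes "t \<ge> 0"
  shows "\<theta> t \<ge> -1" "\<theta> t \<le> B/(w t)^2" "\<theta> t \<le> B - 1" "\<theta> t < B"
proof -
  have w: "w t \<ge> 1" using w_ge assms .
  have B: "B > 1" using basic by simp
  show "\<theta> t \<ge> -1" unfolding \<theta>_def using w B by simp
  show "\<theta> t \<le> B/(w t)^2" unfolding \<theta>_def by simp
  have "(w t)^2 \<ge> 1" using w by (simp add: one_le_power)
  then have "B/(w t)^2 \<le> B/1" using B by (intro divide_left_mono) auto
  then show "\<theta> t \<le> B - 1" unfolding \<theta>_def by simp
  then show "\<theta> t < B" by simp
qed

lemma theta_mono:
  assumes "0 \<le> s" "s \<le> t"
  shows "\<theta> t \<le> \<theta> s"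
proof -
  have "w s \<le> w t" unfolding w_def using assms basic by (simp add: mult_left_mono)
  then have "(w s)^2 \<le> (w t)^2" using w_ge[of s] assms by (intro power_mono) auto
  then have "B/(w t)^2 \<le> B/(w s)^2" using basic w_ge[of s] assms
    by (intro divide_left_mono) (auto intro!: mult_pos_pos)
  then show ?thesis unfolding \<theta>_def by simp
qed

lemma theta_deriv:
  assumes "t \<ge> 0"
  shows "(\<theta> has_real_derivative \<theta>' t) (at t)"
proof -
  have w: "w t \<noteq> 0" using w_ge[OF assms] by simp
  have "((\<lambda>t. -1 + B/(1 + lam*t)^2) has_real_derivative
      (- (B * (of_nat 2 * (1 + lam*t) ^ (2 - 1) * (0 + lam * 1)) / ((1 + lam*t)^2 * (1 + lam*t)^2)))) (at t)"
    using w unfolding w_def by (intro derivative_eq_intros) auto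
  moreover have "- (B * (of_nat 2 * (1 + lam*t) ^ (2 - 1) * (0 + lam * 1)) / ((1 + lam*t)^2 * (1 + lam*t)^2)) = \<theta>' t"
    using w unfolding \<theta>'_def w_def by (simp add: divide_simps power2_eq_square power3_eq_cube)
  ultimately show ?thesis unfolding \<theta>_def w_def by simp
qed

lemma w_derivs:
  assumes "t \<ge> 0"
  shows "((\<lambda>t. 1/w t) has_real_derivative -lam/(w t)^2) (at t)"
    "((\<lambda>t. 1/(w t)^3) has_real_derivative -3*lam/(w t)^4) (at t)"
proof -
  have w: "w t \<noteq> 0" "w t > 0" using w_ge[OF assms] by auto
  have dw: "(w has_real_derivative lam) (at t)" unfolding w_def by (auto intro!: derivative_eq_intros)
  show "((\<lambda>t. 1/w t) has_real_derivative -lam/(w t)^2) (at t)"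
    using DERIV_inverse_fun[OF dw w(1)] by (simp add: inverse_eq_divide power2_eq_square)
  have dw3: "((\<lambda>t. (w t)^3) has_real_derivative 3 * (w t)^2 * lam) (at t)"
    using DERIV_power[OF dw, of 3] by (simp add: algebra_simps)
  have w3: "(w t)^3 \<noteq> 0" using w by simp
  have X: "((\<lambda>t. inverse ((w t)^3)) has_real_derivative - (3 * (w t)^2 * lam * inverse ((w t ^ 3) ^ Suc (Suc 0)))) (at t)"
    using DERIV_inverse_fun[OF dw3 w3] .
  have eq: "- (3 * (w t)^2 * lam * inverse ((w t ^ 3) ^ Suc (Suc 0))) = -3*lam/(w t)^4"
    using w by (simp add: divide_simps power2_eq_square power3_eq_cube power4_eq_xxxx)
  show "((\<lambda>t. 1/(w t)^3) has_real_derivative -3*lam/(w t)^4) (at t)"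
    using X unfolding eq by (simp add: inverse_eq_divide)
qed

lemma Phi_deriv:
  assumes "t \<ge> 0"
  shows "(\<Phi> has_real_derivative (\<theta> t + (\<theta> t)^2/A)) (at t)"
proof -
  have w: "w t \<noteq> 0" "w t > 0" using w_ge[OF assms] by auto
  have l: "lam \<noteq> 0" "A \<noteq> 0" using basic by auto
  note d = w_derivs[OF assms]
  define iw where "iw = (\<lambda>t. 1/w t)"
  define iw3 where "iw3 = (\<lambda>t. 1/(w t)^3)"
  have P: "\<Phi> = (\<lambda>t. -(1 - 1/A)*t + (B/lam)*(1 - iw t)*(1 - 2/A) + (B^2/(3*lam*A))*(1 - iw3 t))"
    unfolding \<Phi>_def iw_def iw3_def by simp
  have d1: "(iw has_real_derivative -lam/(w t)^2) (at t)" unfolding iw_def by (rule d(1))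
  have d3: "(iw3 has_real_derivative -3*lam/(w t)^4) (at t)" unfolding iw3_def by (rule d(2))
  have "(\<Phi> has_real_derivative
     (-(1 - 1/A)*1 + (B/lam)*(0 - (-lam/(w t)^2))*(1 - 2/A) + (B^2/(3*lam*A))*(0 - (-3*lam/(w t)^4)))) (at t)"
    unfolding P
    by (rule DERIV_add[OF DERIV_add[OF DERIV_cmult[OF DERIV_ident, of "-(1 - 1/A)"]
        DERIV_cmult_right[OF DERIV_cmult[OF DERIV_diff[OF DERIV_const[of 1] d1], of "B/lam"], of "1 - 2/A"]]
        DERIV_cmult[OF DERIV_diff[OF DERIV_const[of 1] d3], of "B^2/(3*lam*A)"]])
  moreover have "-(1 - 1/A)*1 + (B/lam)*(0 - (-lam/(w t)^2))*(1 - 2/A) + (B^2/(3*lam*A))*(0 - (-3*lam/(w t)^4)) = \<theta> t + (\<theta> t)^2/A"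
    unfolding \<theta>_def using w l by (simp add: divide_simps power2_eq_square power4_eq_xxxx) algebra
  ultimately show ?thesis by simp
qed


lemma R_deriv: "t \<ge> 0 \<Longrightarrow> (R has_real_derivative R' t) (at t)"
  unfolding R_def[abs_def] R'_def using Phi_deriv by (auto intro!: derivative_eq_intros)

lemma R0: "R 0 = -1/ee" and theta0: "\<theta> 0 = B - 1"
  unfolding R_def \<Phi>_def \<theta>_def w_def by simp_all

lemma Apos_facts: "1/A > 0" "1/A < 1" "c/A < 1"
proof -
  have A: "A > 1" "A > c" using basic by auto
  then show "1/A > 0" by simp
  show "1/A < 1" using A by simp
  show "c/A < 1" using A by (simp add: divide_less_eq)
qed

lemma one_theta: "t \<ge> 0 \<Longrightarrow> 1 + \<theta> t/A > 0"
proof -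
  assume t: "t \<ge> 0"
  have "\<theta> t \<ge> -1" using theta_bd[OF t] by simp
  moreover have "A > 0" using basic by simp
  ultimately have "\<theta> t/A \<ge> (-1)/A" by (intro divide_right_mono) auto
  moreover have "(-1)/A = -(1/A)" by simp
  moreover have "1/A < 1" by (rule Apos_facts)
  ultimately show ?thesis by linarith
qed

lemma R_dec:
  assumes "0 \<le> s" "s \<le> t" "\<theta> t \<ge> 0"
  shows "R t \<le> R s"
proof -
  have "(\<lambda>x. - R x) s \<le> (\<lambda>x. - R x) t"
  proof (rule mono_fin[OF assms(2) finite.emptyI])
    have "continuous_on {s..t} R"
      using assms by (intro continuous_at_imp_continuous_on ballI DERIV_isCont[OF R_deriv]) auto
    then show "continuous_on {s..t} (\<lambda>x. - R x)" by (intro continuous_intros)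
    fix x assume x: "x \<in> {s<..<t} - {}"
    then have x0: "x \<ge> 0" using assms by auto
    have th: "\<theta> x \<ge> 0" using theta_mono[of x t] x assms by auto
    have "\<theta> x + (\<theta> x)^2/A \<ge> 0" using th basic by simp
    then have "- R' x \<ge> 0" unfolding R'_def using basic by simp
    then show "((\<lambda>x. - R x) has_real_derivative - R' x) (at x) \<and> - R' x \<ge> 0"
      using R_deriv[OF x0] by (auto intro!: derivative_eq_intros)
  qed
  then show ?thesis by simp
qed

lemma R_inc:
  assumes "0 \<le> s" "s \<le> t" "\<theta> s \<le> 0"
  shows "R s \<le> R t"
proof (rule mono_fin[OF assms(2) finite.emptyI])
  show "continuous_on {s..t} R"
    using assms by (intro continuous_at_imp_continuous_on ballI DERIV_isCont[OF R_deriv]) auto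
  fix x assume x: "x \<in> {s<..<t} - {}"
  then have x0: "x \<ge> 0" using assms by auto
  have th: "\<theta> x \<le> 0" using theta_mono[of s x] x assms by auto
  have "\<theta> x + (\<theta> x)^2/A = \<theta> x * (1 + \<theta> x/A)" by (simp add: algebra_simps power2_eq_square)
  also have "... \<le> 0" using th one_theta[OF x0] by (simp add: mult_nonpos_nonneg)
  finally have "R' x \<ge> 0" unfolding R'_def using basic by (simp add: mult_nonneg_nonpos)
  then show "(R has_real_derivative R' x) (at x) \<and> R' x \<ge> 0" using R_deriv[OF x0] by simp
qed

lemma coef_pos_theta: "\<theta> t \<ge> 0 \<Longrightarrow> coef t \<le> c"
proof -
  assume th: "\<theta> t \<ge> 0"
  have "coef t = c + \<theta> t * (c/A - 1)" unfolding coef_def by (simp add: algebra_simps)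
  moreover have "\<theta> t * (c/A - 1) \<le> 0" using th Apos_facts by (simp add: mult_nonneg_nonpos)
  ultimately show ?thesis by simp
qed

lemma coef_neg_theta: "\<theta> t \<le> 0 \<Longrightarrow> coef t \<ge> c"
proof -
  assume th: "\<theta> t \<le> 0"
  have "coef t = c + \<theta> t * (c/A - 1)" unfolding coef_def by (simp add: algebra_simps)
  moreover have "\<theta> t * (c/A - 1) \<ge> 0" using th Apos_facts by (simp add: mult_nonpos_nonpos)
  ultimately show ?thesis by simp
qed

lemma F0: "F 0 < 0"
proof -
  have "\<theta> 0 \<ge> 0" unfolding theta0 using basic by simp
  then have "coef 0 \<le> c" by (rule coef_pos_theta)
  moreover have "1/ee \<ge> 4*c"
  proof -
    have ee: "ee \<le> 1/(4*c)" "ee > 0" using basic by auto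
    have "1/(1/(4*c)) \<le> 1/ee" using ee c by (intro divide_left_mono) auto
    then show ?thesis by simp
  qed
  ultimately show ?thesis unfolding F_def R0 using c by linarith
qed


lemma Phi_le:
  assumes t: "t \<ge> 0"
  shows "\<Phi> t \<le> -(1 - 1/A)*t + B/lam + B^2/lam"
proof -
  have w: "w t \<ge> 1" using w_ge[OF t] .
  have l: "lam > 0" "B > 1" "A > 1" using basic by auto
  have a1: "0 \<le> 1 - 1/w t" "1 - 1/w t \<le> 1" using w by auto
  have a2: "\<bar>1 - 2/A\<bar> \<le> 1"
  proof -
    have "2/A > 0" "2/A < 2" using l by (auto simp: divide_less_eq)
    then show ?thesis by linarith
  qed
  have "(1 - 1/w t)*(1 - 2/A) \<le> \<bar>(1 - 1/w t)*(1 - 2/A)\<bar>" by simp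
  also have "... = \<bar>1 - 1/w t\<bar> * \<bar>1 - 2/A\<bar>" by (simp add: abs_mult)
  also have "... \<le> 1 * 1" using a1 a2 by (intro mult_mono) auto
  finally have p1: "(1 - 1/w t)*(1 - 2/A) \<le> 1" by simp
  have "(B/lam)*(1 - 1/w t)*(1 - 2/A) = (B/lam)*((1 - 1/w t)*(1 - 2/A))" by simp
  also have "... \<le> (B/lam)*1" using p1 l by (intro mult_left_mono) auto
  finally have T2: "(B/lam)*(1 - 1/w t)*(1 - 2/A) \<le> B/lam" by simp
  have "(w t)^3 \<ge> 1" using w by (simp add: one_le_power)
  then have "1/(w t)^3 \<le> 1/1" using w by (intro divide_left_mono) auto
  moreover have "1/(w t)^3 > 0" using w by simp
  ultimately have a3: "0 \<le> 1 - 1/(w t)^3" "1 - 1/(w t)^3 \<le> 1" by auto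
  have "(B^2/(3*lam*A))*(1 - 1/(w t)^3) \<le> (B^2/(3*lam*A))*1" using a3 l by (intro mult_left_mono) auto
  also have "B^2/(3*lam*A) \<le> B^2/lam" using l by (intro divide_left_mono) auto
  finally have T3: "(B^2/(3*lam*A))*(1 - 1/(w t)^3) \<le> B^2/lam" by simp
  show ?thesis unfolding \<Phi>_def using T2 T3 by linarith
qed

definition "tb = (1/ee + \<gamma>*(B + B^2)/lam)/(\<gamma>*(1 - 1/A)) + B/lam"

lemma tb_facts: "tb \<ge> 0" "R tb \<ge> 0" "\<theta> tb \<le> 0" "F tb > 0"
proof -
  have l: "lam > 0" "B > 1" "\<gamma> > 0" "ee > 0" using basic by auto
  have A1: "1 - 1/A > 0" using Apos_facts by simp
  have gA: "\<gamma>*(1 - 1/A) > 0" using l A1 by simp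
  have q: "(1/ee + \<gamma>*(B + B^2)/lam)/(\<gamma>*(1 - 1/A)) \<ge> 0" using l gA by (intro divide_nonneg_pos) auto
  show tb0: "tb \<ge> 0" unfolding tb_def using q l by simp
  have "\<gamma>*(1 - 1/A)*tb \<ge> \<gamma>*(1 - 1/A)*((1/ee + \<gamma>*(B + B^2)/lam)/(\<gamma>*(1 - 1/A)))"
    unfolding tb_def using gA l by (intro mult_left_mono) auto
  also have "\<gamma>*(1 - 1/A)*((1/ee + \<gamma>*(B + B^2)/lam)/(\<gamma>*(1 - 1/A))) = 1/ee + \<gamma>*(B + B^2)/lam"
    using gA by (intro times_divide_eq_right[THEN trans] nonzero_mult_div_cancel_left) auto
  finally have m: "\<gamma>*(1 - 1/A)*tb \<ge> 1/ee + \<gamma>*(B + B^2)/lam" .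
  have "\<gamma> * \<Phi> tb \<le> \<gamma> * (-(1 - 1/A)*tb + B/lam + B^2/lam)" using Phi_le[OF tb0] l by (intro mult_left_mono) auto
  also have "... = -(\<gamma>*(1 - 1/A)*tb) + \<gamma>*(B + B^2)/lam" by (simp add: algebra_simps add_divide_distrib)
  finally have "\<gamma> * \<Phi> tb \<le> -(\<gamma>*(1 - 1/A)*tb) + \<gamma>*(B + B^2)/lam" .
  then show Rtb: "R tb \<ge> 0" unfolding R_def using m by linarith
  have "lam * tb \<ge> lam * (B/lam)" unfolding tb_def using l q by (intro mult_left_mono) auto
  then have "lam * tb \<ge> B" using l by simp
  then have wb: "w tb \<ge> B" "w tb \<ge> 1" unfolding w_def using l by auto
  have "(w tb)^2 \<ge> w tb" using wb by (simp add: power2_eq_square)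
  then have "(w tb)^2 \<ge> B" using wb by linarith
  then have "B/(w tb)^2 \<le> 1" using l by (simp add: divide_le_eq)
  then show th: "\<theta> tb \<le> 0" unfolding \<theta>_def by simp
  have "coef tb \<ge> c" using coef_neg_theta[OF th] .
  then show "F tb > 0" unfolding F_def using Rtb c by linarith
qed


definition "u0 = c*(\<rho>*(1+\<delta>) + ee + \<delta>/A)/(\<rho>*c+1)"
definition "v0 = (1 + \<delta> - c*ee - c*\<delta>/A)/(\<rho>*c+1)"

lemma invA: "1/A = (1-\<rho>)/(c+1)" unfolding A_def by simp

lemma witness_lt1: "(u0, v0) \<in> V_set c \<rho> admissible"
proof -
  have bs: "\<delta> > 0" "\<delta> \<le> 1/4" "A > 1" "A > c" "\<gamma> > 0" "\<gamma> \<le> 1" "ee > 0" "ee \<le> 1/(4*c)"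
    "B > 1" "K1 > 0" "lam > 0" "c*\<delta> \<le> 1/2" "\<delta> \<le> \<rho>*c" using basic by auto
  have h: "\<rho>*c+1 > 0" "c+1 > 0" using c r by (auto simp: add_pos_pos)
  have tb: "tb \<ge> 0" "F tb > 0" using tb_facts by auto
  have cR: "continuous_on {0..tb} R"
    by (intro continuous_at_imp_continuous_on ballI DERIV_isCont[OF R_deriv]) auto
  have cth: "continuous_on {0..tb} \<theta>"
    by (intro continuous_at_imp_continuous_on ballI DERIV_isCont[OF theta_deriv]) auto
  have cF: "continuous_on {0..tb} F" unfolding F_def[abs_def] coef_def[abs_def]
    using cR cth bs by (intro continuous_intros) auto
  obtain T where T: "0 < T" "T \<le> tb" "F T = 0" "\<And>t. t \<in> {0..<T} \<Longrightarrow> F t < 0"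
    using first_zero_exact[OF cF F0 tb(2) tb(1)] by auto
  have Fle: "F t \<le> 0" if "0 \<le> t" "t \<le> T" for t
  proof (cases "t = T")
    case False
    then show ?thesis using T(4)[of t] that by auto
  qed (use T in auto)
  have Rneg: "R t < 0" if t: "0 \<le> t" "t \<le> T" for t
  proof (cases "\<theta> t \<ge> 0")
    case True
    then have "R t \<le> R 0" using R_dec[of 0 t] t by auto
    moreover have "1/ee > 0" using bs by simp
    ultimately show ?thesis unfolding R0 by linarith
  next
    case False
    then have "R t \<le> R T" using R_inc[of t T] t by auto
    moreover have "\<theta> T \<le> 0" using theta_mono[of t T] t False by auto
    then have "coef T \<ge> c" by (rule coef_neg_theta)
    moreover have "R T = - coef T" using T(3) unfolding F_def by simp
    ultimately show ?thesis using c by linarith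
  qed
  define Dw where "Dw t = \<theta> t / R t" for t
  define gw where "gw t = (1 + \<theta> t/A) / R t" for t
  define Dd where "Dd t = \<theta>' t / R t - \<theta> t * R' t / (R t)^2" for t
  define gd where "gd t = (\<theta>' t / A) / R t - (1 + \<theta> t/A) * R' t / (R t)^2" for t
  have vv: "1 - Dw t + c * gw t = F t / R t" if "0 \<le> t" "t \<le> T" for t
    using Rneg[OF that] unfolding Dw_def gw_def F_def coef_def by (simp add: divide_simps)
  have vvnn: "1 - Dw t + c * gw t \<ge> 0" if "0 \<le> t" "t \<le> T" for t
    unfolding vv[OF that] using Fle[OF that] Rneg[OF that] by (simp add: divide_nonpos_neg)
  have gneg: "gw t < 0" if "0 \<le> t" "t \<le> T" for t
    unfolding gw_def using one_theta[OF that(1)] Rneg[OF that] by (simp add: divide_pos_neg)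
  have oneD: "1 - Dw t > 0" if "0 \<le> t" "t \<le> T" for t
  proof -
    have "c * gw t < 0" using gneg[OF that] c by (simp add: mult_pos_neg)
    then show ?thesis using vvnn[OF that] by linarith
  qed
  have "(u0, v0) \<in> V_set c \<rho> admissible"
  proof (rule witness_E[OF c r(1) T(1), of Dw Dd gw gd])
    fix t assume t: "0 \<le> t" "t \<le> T"
    have Rt: "R t \<noteq> 0" using Rneg[OF t] by simp
    note dth = theta_deriv[OF t(1)] and dR = R_deriv[OF t(1)]
    show "(Dw has_real_derivative Dd t) (at t)" unfolding Dw_def[abs_def] Dd_def
      using dth dR Rt by (auto intro!: derivative_eq_intros simp: divide_simps power2_eq_square)
    show "(gw has_real_derivative gd t) (at t)" unfolding gw_def[abs_def] gd_def
      using dth dR Rt bs by (auto intro!: derivative_eq_intros simp: divide_simps power2_eq_square; simp add: algebra_simps)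
    show "gd t = ((\<rho>*c+1)/(c+1)) * Dw t * gw t + (1-\<rho>) * Dd t/(c+1)"
    proof -
      have iA: "(1-\<rho>)/(c+1) = 1/A" using invA by simp
      have "(1-\<rho>) * Dd t/(c+1) = ((1-\<rho>)/(c+1)) * Dd t" by simp
      also have "... = Dd t / A" unfolding iA by simp
      finally have "(1-\<rho>) * Dd t/(c+1) = Dd t / A" .
      moreover have "gd t = \<gamma> * Dw t * gw t + Dd t / A"
        unfolding gd_def Dd_def Dw_def gw_def R'_def using Rt bs
        by (simp add: divide_simps power2_eq_square) algebra
      ultimately show ?thesis unfolding \<gamma>_def by simp
    qed
    show "isCont Dd t \<and> isCont gd t"
    proof -
      have "isCont \<theta> t" "isCont R t" using dth dR by (auto intro: DERIV_isCont)
      moreover have "isCont \<theta>' t" unfolding \<theta>'_def[abs_def] w_def using w_ge[OF t(1)] unfolding w_def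
        by (intro continuous_intros) auto
      moreover have "isCont R' t" unfolding R'_def[abs_def] using \<open>isCont \<theta> t\<close> bs
        by (intro continuous_intros) auto
      ultimately show ?thesis unfolding Dd_def[abs_def] gd_def[abs_def] using Rt bs
        by (auto intro!: continuous_intros)
    qed
    show "\<rho>*(1 - Dw t) - gw t > 0" using oneD[OF t] gneg[OF t] r by (smt (verit) mult_pos_pos)
    show "(\<rho>*c+1)*Dd t + \<rho>*(c+1)*Dw t*(1 - Dw t) + c*(\<rho>-1)*Dw t*gw t \<ge> 0"
    proof -
      define th where "th = \<theta> t"
      define X where "X = - R t"
      define W where "W = w t"
      have Xp: "X > 0" unfolding X_def using Rneg[OF t] by simp
      have W1: "W \<ge> 1" unfolding W_def using w_ge[OF t(1)] .
      have op: "1 + th/A > 0" unfolding th_def using one_theta[OF t(1)] .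
      have thp: "\<theta>' t < 0" unfolding \<theta>'_def using bs W1 unfolding W_def by (simp add: divide_neg_pos)
      have R'e: "R' t = - \<gamma> * (th * (1 + th/A))" unfolding R'_def th_def by (simp add: algebra_simps power2_eq_square)
      have DdA: "Dd t = \<theta>' t / R t + \<gamma> * (th * th * (1 + th/A)) / (R t)^2"
        unfolding Dd_def R'e th_def using Rt by (simp add: divide_simps)
      have sec: "\<gamma> * (th * th * (1 + th/A)) / (R t)^2 \<ge> 0" using bs op by simp
      have fst: "\<theta>' t / R t > 0" using thp Rneg[OF t] by (simp add: divide_neg_neg)
      show ?thesis
      proof (cases "th \<le> 0")
        case True
        have Dn: "Dw t \<ge> 0" unfolding Dw_def th_def[symmetric] using True Rneg[OF t] by (simp add: divide_nonpos_neg)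
        have t1: "\<rho>*(c+1)*Dw t*(1 - Dw t) \<ge> 0" using Dn oneD[OF t] r h by simp
        have t2: "c*(\<rho>-1)*Dw t*gw t \<ge> 0"
        proof -
          have "Dw t * gw t \<le> 0" using Dn gneg[OF t] by (simp add: mult_nonneg_nonpos)
          moreover have "c*(\<rho>-1) \<le> 0" using c r by (simp add: mult_nonneg_nonpos)
          ultimately have "(c*(\<rho>-1)) * (Dw t * gw t) \<ge> 0" by (simp add: mult_nonpos_nonpos)
          then show ?thesis by (simp add: mult.assoc)
        qed
        have "Dd t \<ge> 0" unfolding DdA using sec fst by simp
        then have "(\<rho>*c+1)*Dd t \<ge> 0" using h by simp
        then show ?thesis using t1 t2 by linarith
      next
        case False
        then have thpos: "th > 0" by simp
        have RR: "R t \<le> R 0" using R_dec[of 0 t] t thpos unfolding th_def by auto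
        then have "X \<ge> 1/ee" unfolding X_def R0 by simp
        then have "1/X \<le> 1/(1/ee)" using bs Xp by (intro divide_left_mono) auto
        then have iX: "1/X \<le> ee" by simp
        have thB: "th \<le> B/W^2" "th \<le> B" unfolding th_def W_def using theta_bd[OF t(1)] by auto
        have WB: "W < B"
        proof -
          have "th = -1 + B/W^2" unfolding th_def \<theta>_def W_def by simp
          then have "B/W^2 > 1" using thpos by linarith
          then have "W^2 < B" using W1 by (simp add: divide_less_eq less_divide_eq)
          moreover have "W \<le> W^2" using W1 by (simp add: power2_eq_square)
          ultimately show ?thesis by linarith
        qed
        define y where "y = th / X"
        have yp: "y > 0" unfolding y_def using thpos Xp by simp
        have Dwy: "Dw t = - y" unfolding Dw_def y_def X_def th_def by simp
        have gwy: "gw t = - (1 + th/A) / X" unfolding gw_def X_def th_def using Rt by (simp add: field_simps)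
        have y1: "y \<le> B * ee"
        proof -
          have "y = th * (1/X)" unfolding y_def by simp
          also have "... \<le> B * ee" using thB thpos iX Xp by (intro mult_mono) auto
          finally show ?thesis .
        qed
        have y2: "y \<le> (B/W^2) / X" unfolding y_def using thB Xp by (intro divide_right_mono) auto
        have fstv: "\<theta>' t / R t = 2*B*lam/(W^3 * X)" unfolding \<theta>'_def X_def W_def by simp
        have P1: "(\<rho>*c+1)*Dd t \<ge> 2*B*lam/(W^3 * X)"
        proof -
          have "Dd t \<ge> 2*B*lam/(W^3 * X)" unfolding DdA fstv using sec by simp
          moreover have "2*B*lam/(W^3 * X) \<ge> 0" using bs Xp W1 by simp
          moreover have "\<rho>*c \<ge> 0" using r c by simp
          moreover have "1 * Dd t \<le> (\<rho>*c+1) * Dd t" using \<open>\<rho>*c \<ge> 0\<close> calculation(1,2)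
            by (intro mult_right_mono) auto
          ultimately show ?thesis by linarith
        qed
        have N1: "\<rho>*(c+1)*Dw t*(1 - Dw t) \<ge> -((c+1)*y*(1 + B*ee))"
        proof -
          have "\<rho>*(c+1)*Dw t*(1 - Dw t) = -(\<rho> * ((c+1)*y*(1+y)))" unfolding Dwy by (simp add: algebra_simps)
          moreover have "\<rho> * ((c+1)*y*(1+y)) \<le> 1 * ((c+1)*y*(1+y))" using r yp h by (intro mult_right_mono) auto
          moreover have "(c+1)*y*(1+y) \<le> (c+1)*y*(1 + B*ee)" using y1 yp h by (intro mult_left_mono) auto
          ultimately show ?thesis by linarith
        qed
        have N2: "c*(\<rho>-1)*Dw t*gw t \<ge> -(c*y*((1+B)*ee))"
        proof -
          have e1: "c*(\<rho>-1)*Dw t*gw t = -((1-\<rho>) * (c*y*((1 + th/A)/X)))" unfolding Dwy gwy using Xp bs by (simp add: field_simps)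
          have "th/A \<le> th" using thpos bs by (simp add: divide_le_eq)
          then have "1 + th/A \<le> 1 + B" using thB by linarith
          moreover have "1 + th/A \<ge> 0" using op by simp
          ultimately have "(1 + th/A) * (1/X) \<le> (1+B) * ee" using iX Xp by (intro mult_mono) auto
          then have q: "(1 + th/A)/X \<le> (1+B)*ee" by simp
          have q0: "(1 + th/A)/X \<ge> 0" using op Xp by simp
          have "c*y*((1 + th/A)/X) \<le> c*y*((1+B)*ee)" using q c yp by (intro mult_left_mono) auto
          moreover have "(1-\<rho>) * (c*y*((1 + th/A)/X)) \<le> 1 * (c*y*((1 + th/A)/X))"
          proof (rule mult_right_mono)
            show "1 - \<rho> \<le> 1" using r by simp
            show "0 \<le> c*y*((1 + th/A)/X)" using c yp q0 by (intro mult_nonneg_nonneg) auto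
          qed
          ultimately show ?thesis unfolding e1 by linarith
        qed
        have sumK: "(c+1)*y*(1 + B*ee) + c*y*((1+B)*ee) = y * K1" unfolding K1_def by (simp add: algebra_simps)
        have yK: "y * K1 \<le> lam / (W^2 * X)"
        proof -
          have "y * K1 \<le> ((B/W^2) / X) * K1" using y2 bs by (intro mult_right_mono) auto
          also have "... = lam / (W^2 * X)" unfolding lam_def by simp
          finally show ?thesis .
        qed
        have P2: "2*B*lam/(W^3 * X) \<ge> lam / (W^2 * X)"
        proof -
          have "2*B*lam/(W^3 * X) = (lam / (W^2 * X)) * (2*B/W)" using W1 Xp by (simp add: field_simps power3_eq_cube power2_eq_square)
          moreover have "2*B/W \<ge> 1" using WB W1 by (simp add: le_divide_eq)
          moreover have "lam / (W^2 * X) \<ge> 0" using bs Xp by simp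
          moreover have "(lam / (W^2 * X)) * 1 \<le> (lam / (W^2 * X)) * (2*B/W)"
            using calculation(2,3) by (intro mult_left_mono) auto
          ultimately show ?thesis by simp
        qed
        show ?thesis using P1 N1 N2 sumK yK P2 by linarith
      qed
    qed
  next
    show "1 - Dw T + c * gw T = 0" unfolding vv[OF less_imp_le[OF T(1)] order_refl] T(3) by simp
    have D0: "Dw 0 = -\<delta>" unfolding Dw_def theta0 R0 B_def using bs by simp
    have g0: "gw 0 = - ee - \<delta>/A" unfolding gw_def theta0 R0 B_def using bs by (simp add: field_simps)
    show "u0 = c*(\<rho>*(1 - Dw 0) - gw 0)/(\<rho>*c+1)" unfolding D0 g0 u0_def by (simp add: algebra_simps)
    show "v0 = (1 - Dw 0 + c*gw 0)/(\<rho>*c+1)" unfolding D0 g0 v0_def by (simp add: algebra_simps)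
    have iA: "1/A \<le> 1 - \<rho>" unfolding invA using c r by (simp add: divide_le_eq)
    have dA: "\<delta>/A \<le> \<delta>*(1-\<rho>)" using iA bs by (metis mult_left_mono less_imp_le times_divide_eq_right mult_1_right)
    have cA: "c*\<delta>/A \<le> \<delta>" 
    proof -
      have "c/A \<le> 1" using bs by (simp add: divide_le_eq)
      then have "\<delta> * (c/A) \<le> \<delta> * 1" using bs by (intro mult_left_mono) auto
      then show ?thesis by (simp add: algebra_simps)
    qed
    have ce: "c*ee \<le> 1/4" using bs c by (simp add: field_simps)
    have "c*(\<rho>*\<delta> + \<delta>/A) \<le> c*(\<rho>*\<delta> + \<delta>*(1-\<rho>))" using dA c by (intro mult_left_mono) auto
    also have "... = c*\<delta>" by (simp add: algebra_simps)
    finally have "c*(\<rho>*\<delta> + \<delta>/A) \<le> 1/2" using bs by linarith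
    then have "c*(\<rho>*(1+\<delta>) + ee + \<delta>/A) \<le> \<rho>*c+1" using ce by (simp add: algebra_simps)
    then show "u0 \<le> 1" unfolding u0_def using h by simp
    show "0 \<le> u0" unfolding u0_def using h bs c r by (intro divide_nonneg_pos mult_nonneg_nonneg add_nonneg_nonneg) auto
    have vpos: "1 + \<delta> - c*ee - c*\<delta>/A > 0" using cA ce bs by linarith
    then show "0 \<le> v0" unfolding v0_def using h by simp
    have "1 + \<delta> - c*ee - c*\<delta>/A \<le> \<rho>*c+1" using bs ce c by (smt (verit) divide_nonneg_pos mult_pos_pos)
    then show "v0 \<le> 1" unfolding v0_def using h by simp
    show "(u0, v0) \<noteq> (0, 0)" using vpos h unfolding v0_def by auto
  qed
  then show ?thesis .
qed


lemma uv_bounds: "0 \<le> u0" "u0 \<le> 1" "0 < v0" "v0 \<le> 1"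
proof -
  have bs: "\<delta> > 0" "\<delta> \<le> 1/4" "A > 1" "A > c" "\<gamma> > 0" "\<gamma> \<le> 1" "ee > 0" "ee \<le> 1/(4*c)"
    "B > 1" "K1 > 0" "lam > 0" "c*\<delta> \<le> 1/2" "\<delta> \<le> \<rho>*c" using basic by auto
  have h: "\<rho>*c+1 > 0" "c+1 > 0" using c r by (auto simp: add_pos_pos)
    have iA: "1/A \<le> 1 - \<rho>" unfolding invA using c r by (simp add: divide_le_eq)
  have dA: "\<delta>/A \<le> \<delta>*(1-\<rho>)" using iA bs by (metis mult_left_mono less_imp_le times_divide_eq_right mult_1_right)
  have cA: "c*\<delta>/A \<le> \<delta>" 
  proof -
    have "c/A \<le> 1" using bs by (simp add: divide_le_eq)
    then have "\<delta> * (c/A) \<le> \<delta> * 1" using bs by (intro mult_left_mono) auto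
    then show ?thesis by (simp add: algebra_simps)
  qed
  have ce: "c*ee \<le> 1/4" using bs c by (simp add: field_simps)
  have "c*(\<rho>*\<delta> + \<delta>/A) \<le> c*(\<rho>*\<delta> + \<delta>*(1-\<rho>))" using dA c by (intro mult_left_mono) auto
  also have "... = c*\<delta>" by (simp add: algebra_simps)
  finally have "c*(\<rho>*\<delta> + \<delta>/A) \<le> 1/2" using bs by linarith
  then have "c*(\<rho>*(1+\<delta>) + ee + \<delta>/A) \<le> \<rho>*c+1" using ce by (simp add: algebra_simps)
  then show "u0 \<le> 1" unfolding u0_def using h by simp
  show "0 \<le> u0" unfolding u0_def using h bs c r by (intro divide_nonneg_pos mult_nonneg_nonneg add_nonneg_nonneg) auto
  have vpos: "1 + \<delta> - c*ee - c*\<delta>/A > 0" using cA ce bs by linarith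
  then show "0 < v0" unfolding v0_def using h by simp
  have "1 + \<delta> - c*ee - c*\<delta>/A \<le> \<rho>*c+1" using bs ce c by (smt (verit) divide_nonneg_pos mult_pos_pos)
  then show "v0 \<le> 1" unfolding v0_def using h by simp
qed

end

lemma main_lt1:
  fixes c \<rho> m M :: real
  assumes c: "c > 0" and r: "\<rho> > 0" "\<rho> < 1" and M: "M > 0" and m: "0 \<le> m"
  shows "\<exists>p. p \<in> V_set c \<rho> admissible \<and> p \<notin> V_set c \<rho> (admissible_mM m M)"
proof -
  define \<delta> where "\<delta> = \<rho>*c/(2*(1+c^2))"
  define \<gamma> where "\<gamma> = (\<rho>*c+1)/(c+1)"
  define WQ where "WQ = (1-\<rho>)/(1+\<rho>*c)"
  define C where "C = (1+\<rho>) + M*(c+1)"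
  define \<tau> where "\<tau> = \<delta>/(2*C)"
  define \<kappa> where "\<kappa> = \<gamma>*WQ*\<delta>^2/4"
  define \<epsilon> where "\<epsilon> = min (\<kappa>*\<tau>) (1/(4*c))"
  have h: "\<rho>*c+1 > 0" "c+1 > 0" "1 + \<rho>*c > 0" using c r by (auto simp: add_pos_pos)
  have p2: "1 + c^2 > 0" by (simp add: add_pos_nonneg)
  have dp: "\<delta> > 0" unfolding \<delta>_def using c r p2 by (auto intro!: divide_pos_pos)
  have gp: "\<gamma> > 0" "\<gamma> \<le> 1" unfolding \<gamma>_def using h r c by auto
  have WQp: "WQ > 0" unfolding WQ_def using h r by simp
  have "M*(c+1) > 0" using M c by simp
  then have C1: "C \<ge> 1" unfolding C_def using r by linarith
  have taup: "\<tau> > 0" unfolding \<tau>_def using dp C1 by simp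
  have kp: "\<kappa> > 0" unfolding \<kappa>_def using gp WQp dp by simp
  have ep: "\<epsilon> > 0" unfolding \<epsilon>_def using kp taup c by simp
  have eb: "\<epsilon> \<le> 1/(4*c)" "\<epsilon> \<le> \<kappa>*\<tau>" unfolding \<epsilon>_def by auto
  interpret W: wlt1 c \<rho> \<epsilon> using c r ep eb by unfold_locales auto
  have Wd: "W.\<delta> = \<delta>" unfolding W.\<delta>_def \<delta>_def ..
  have Wg: "W.\<gamma> = \<gamma>" unfolding W.\<gamma>_def \<gamma>_def ..
  have bs: "\<delta> \<le> 1/4" using W.basic Wd by auto
  have inV: "(W.u0, W.v0) \<in> V_set c \<rho> admissible" by (rule W.witness_lt1)
  have A: "(c+1)/W.A = 1-\<rho>" unfolding W.A_def using r c by simp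
  have ee: "W.ee = \<gamma>*\<epsilon>" unfolding W.ee_def Wg ..
  have sum: "1 - W.u0 - W.v0 = - \<delta>"
  proof -
    have "W.u0 + W.v0 = (c*(\<rho>*(1+\<delta>) + W.ee + \<delta>/W.A) + (1 + \<delta> - c*W.ee - c*\<delta>/W.A))/(\<rho>*c+1)"
      unfolding W.u0_def W.v0_def Wd by (simp add: add_divide_distrib)
    also have "c*(\<rho>*(1+\<delta>) + W.ee + \<delta>/W.A) + (1 + \<delta> - c*W.ee - c*\<delta>/W.A) = (1+\<delta>)*(\<rho>*c+1)"
      by (simp add: algebra_simps)
    finally show ?thesis using h by simp
  qed
  have Wv: "W.v0 - W.u0/c = WQ - \<epsilon>"
  proof -
    have "W.v0 - W.u0/c = ((1 + \<delta> - c*W.ee - c*\<delta>/W.A) - (\<rho>*(1+\<delta>) + W.ee + \<delta>/W.A))/(\<rho>*c+1)"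
      unfolding W.u0_def W.v0_def Wd using c by (simp add: diff_divide_distrib)
    also have "(1 + \<delta> - c*W.ee - c*\<delta>/W.A) - (\<rho>*(1+\<delta>) + W.ee + \<delta>/W.A) = (1-\<rho>)*(1+\<delta>) - (c+1)*W.ee - ((c+1)/W.A)*\<delta>"
      by (simp add: algebra_simps add_divide_distrib)
    also have "... = (1-\<rho>) - (c+1)*\<gamma>*\<epsilon>" unfolding A ee by (simp add: algebra_simps)
    also have "(c+1)*\<gamma> = \<rho>*c+1" unfolding \<gamma>_def using h by simp
    finally have "W.v0 - W.u0/c = ((1-\<rho>) - (\<rho>*c+1)*\<epsilon>)/(\<rho>*c+1)"
      by (simp add: algebra_simps)
    also have "... = WQ - \<epsilon>" unfolding WQ_def using h by (simp add: field_simps)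
    finally show ?thesis .
  qed
  have kt: "\<kappa>*\<tau> < WQ"
  proof -
    have "\<kappa>*\<tau> = WQ * (\<gamma>*\<delta>^2*\<delta>/(8*C))" unfolding \<kappa>_def \<tau>_def by (simp add: field_simps)
    moreover have "\<gamma>*\<delta>^2*\<delta>/(8*C) < 1"
    proof -
      have d1: "\<delta> \<le> 1" using bs by simp
      have "\<delta>^2 \<le> 1" using dp d1 by (intro power_le_one) auto
      then have "\<delta>^2*\<delta> \<le> 1*1" using dp d1 by (intro mult_mono) auto
      then have "\<delta>^2*\<delta> \<le> 1" by simp
      then have "\<gamma>*(\<delta>^2*\<delta>) \<le> 1*1" using gp dp by (intro mult_mono) auto
      moreover have "8*C \<ge> 8" using C1 by simp
      ultimately show ?thesis using C1 by (simp add: divide_less_eq)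
    qed
    moreover have "WQ * (\<gamma>*\<delta>^2*\<delta>/(8*C)) < WQ * 1"
      using calculation(2) WQp by (intro mult_strict_left_mono) auto
    ultimately show ?thesis by simp
  qed
  have notin: "(W.u0, W.v0) \<notin> V_set c \<rho> (admissible_mM m M)"
  proof (rule notin_V)
    fix a T u v
    assume a: "a \<in> admissible_mM m M" "solves_on c \<rho> a T u v" "T \<ge> 0" "u 0 = W.u0" "v 0 = W.v0" "v T = 0" "u T > 0"
    have bnds: "0 \<le> W.u0" "W.u0 \<le> 1" "0 < W.v0" "W.v0 \<le> 1" using W.uv_bounds by auto
    show False
      using nonreach_lt1[OF c r M m a(1,2,3) a(4,5,6) bnds dp, of \<epsilon>] sum Wv eb kt
      unfolding \<kappa>_def \<tau>_def C_def \<gamma>_def WQ_def by simp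
  qed
  show ?thesis using inV notin by blast
qed

theorem mainTheorem10:
  fixes c \<rho> m M :: real
  assumes "c > 0" and "\<rho> > 0" and "\<rho> \<noteq> 1" and "0 \<le> m" and "m \<le> M" and "M > 0"
  shows "V_set c \<rho> (admissible_mM m M) \<subset> V_set c \<rho> admissible"
proof -
  have sub: "V_set c \<rho> (admissible_mM m M) \<subseteq> V_set c \<rho> admissible"
    unfolding V_set_def admissible_mM_def by auto
  have "\<exists>p. p \<in> V_set c \<rho> admissible \<and> p \<notin> V_set c \<rho> (admissible_mM m M)"
  proof (cases "\<rho> < 1")
    case True
    show ?thesis using main_lt1[OF assms(1,2) True assms(6,4)] .
  next
    case False
    then have "\<rho> > 1" using assms(3) by simp
    then show ?thesis using main_gt1[OF assms(1) _ assms(6,4)] by blast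
  qed
  then show ?thesis using sub by blast
qed

end
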